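(* If $H$ is a Helly $EPT$ graph that is an atom and has exactly $k\geq 4$ cliques, then $H$ has a $k$-gate as an induced subgraph.
   Context: All graphs are finite and simple. An $EPT$ representation of a graph $G$ is a pair $\langle \mathcal{P},T\rangle$ where $T$ is a tree and $\mathcal{P}=(P_v)_{v\in V(G)}$ is a family of subpaths of $T$ such that two distinct vertices $v,w$ are adjacent if and only if $E(P_v)\cap E(P_w)\neq\emptyset$; it is Helly if $(E(P))_{P\in\mathcal{P}}$ has the Helly property (every pairwise intersecting subfamily has nonempty total intersection), and $G$ is Helly $EPT$ if it admits a Helly $EPT$ representation. A clique is a maximal complete set of vertices. A clique $C$ of a connected graph $H$ is a separator if $H-C$ is disconnected; an atom is a connected graph with no clique separator. Gates are defined recursively: (i) every chordless cycle $C_n$ with $n\geq 4$ is a gate; (ii) if $H'$ is a gate, $C$ and $C'$ are disjoint cliques of $H'$, and $P=(v_1,\dots,v_l)$ with $l\geq 2$ is a chordless path vertex-disjoint from $H'$, then the union of $H'$ and $P$ together with all edges between $v_1$ and the vertices of $C$ and all edges between $v_l$ and the vertices of $C'$ is a gate; (iii) there are no other gates. A $k$-gate is a gate with exactly $k$ cliques. *)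

theory Defs
  imports Main
begin

text \<open>Finite simple graphs are given by a vertex set V and an adjacency
  predicate adj; only the values of adj on V matter.\<close>

definition graph :: "'a set \<Rightarrow> ('a \<Rightarrow> 'a \<Rightarrow> bool) \<Rightarrow> bool" where
  "graph V adj \<longleftrightarrow> finite V \<and> (\<forall>x\<in>V. \<forall>y\<in>V. adj x y \<longrightarrow> adj y x)
     \<and> (\<forall>x\<in>V. \<not> adj x x)"

definition complete_set :: "'a set \<Rightarrow> ('a \<Rightarrow> 'a \<Rightarrow> bool) \<Rightarrow> 'a set \<Rightarrow> bool" where
  "complete_set V adj K \<longleftrightarrow> K \<subseteq> V \<and> (\<forall>x\<in>K. \<forall>y\<in>K. x \<noteq> y \<longrightarrow> adj x y)"

definition cliques :: "'a set \<Rightarrow> ('a \<Rightarrow> 'a \<Rightarrow> bool) \<Rightarrow> 'a set set" where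
  "cliques V adj = {K. complete_set V adj K \<and>
      (\<forall>K'. complete_set V adj K' \<and> K \<subseteq> K' \<longrightarrow> K' = K)}"

definition connected_graph :: "'a set \<Rightarrow> ('a \<Rightarrow> 'a \<Rightarrow> bool) \<Rightarrow> bool" where
  "connected_graph V adj \<longleftrightarrow> V \<noteq> {} \<and>
     (\<forall>x\<in>V. \<forall>y\<in>V. (\<lambda>a b. a \<in> V \<and> b \<in> V \<and> adj a b)\<^sup>*\<^sup>* x y)"

definition clique_separator :: "'a set \<Rightarrow> ('a \<Rightarrow> 'a \<Rightarrow> bool) \<Rightarrow> 'a set \<Rightarrow> bool" where
  "clique_separator V adj C \<longleftrightarrow> C \<in> cliques V adj \<and> V - C \<noteq> {}
      \<and> \<not> connected_graph (V - C) adj"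

definition atom :: "'a set \<Rightarrow> ('a \<Rightarrow> 'a \<Rightarrow> bool) \<Rightarrow> bool" where
  "atom V adj \<longleftrightarrow> connected_graph V adj \<and> (\<forall>C. \<not> clique_separator V adj C)"

definition list_adj :: "'a list \<Rightarrow> 'a \<Rightarrow> 'a \<Rightarrow> bool" where
  "list_adj ps x y \<longleftrightarrow> (\<exists>i. Suc i < length ps \<and> {x, y} = {ps ! i, ps ! Suc i})"

definition cycle_adj :: "'a list \<Rightarrow> 'a \<Rightarrow> 'a \<Rightarrow> bool" where
  "cycle_adj xs x y \<longleftrightarrow>
     (\<exists>i < length xs. {x, y} = {xs ! i, xs ! ((Suc i) mod length xs)})"

definition is_path :: "'b set \<Rightarrow> ('b \<Rightarrow> 'b \<Rightarrow> bool) \<Rightarrow> 'b list \<Rightarrow> bool" where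
  "is_path VT adjT ps \<longleftrightarrow> ps \<noteq> [] \<and> distinct ps \<and> set ps \<subseteq> VT \<and>
     (\<forall>i. Suc i < length ps \<longrightarrow> adjT (ps ! i) (ps ! Suc i))"

definition path_edges :: "'b list \<Rightarrow> 'b set set" where
  "path_edges ps = {{ps ! i, ps ! Suc i} | i. Suc i < length ps}"

definition is_tree :: "'b set \<Rightarrow> ('b \<Rightarrow> 'b \<Rightarrow> bool) \<Rightarrow> bool" where
  "is_tree VT adjT \<longleftrightarrow> graph VT adjT \<and> connected_graph VT adjT \<and>
     \<not> (\<exists>xs. distinct xs \<and> 3 \<le> length xs \<and> set xs \<subseteq> VT \<and>
          (\<forall>i < length xs. adjT (xs ! i) (xs ! ((Suc i) mod length xs))))"

definition ept_rep :: "'a set \<Rightarrow> ('a \<Rightarrow> 'a \<Rightarrow> bool) \<Rightarrow> 'b set \<Rightarrow> ('b \<Rightarrow> 'b \<Rightarrow> bool)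
    \<Rightarrow> ('a \<Rightarrow> 'b list) \<Rightarrow> bool" where
  "ept_rep V adj VT adjT P \<longleftrightarrow> is_tree VT adjT \<and> (\<forall>v\<in>V. is_path VT adjT (P v)) \<and>
     (\<forall>v\<in>V. \<forall>w\<in>V. v \<noteq> w \<longrightarrow> (adj v w \<longleftrightarrow> path_edges (P v) \<inter> path_edges (P w) \<noteq> {}))"

definition helly_rep :: "'a set \<Rightarrow> ('a \<Rightarrow> 'b list) \<Rightarrow> bool" where
  "helly_rep V P \<longleftrightarrow> (\<forall>S \<subseteq> V. S \<noteq> {} \<longrightarrow>
     (\<forall>v\<in>S. \<forall>w\<in>S. path_edges (P v) \<inter> path_edges (P w) \<noteq> {}) \<longrightarrow>
     (\<Inter>v\<in>S. path_edges (P v)) \<noteq> {})"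

text \<open>Helly EPT graph; host trees are taken on vertex type nat (every finite
  tree is isomorphic to one on nat).\<close>
definition helly_ept :: "'a set \<Rightarrow> ('a \<Rightarrow> 'a \<Rightarrow> bool) \<Rightarrow> bool" where
  "helly_ept V adj \<longleftrightarrow> (\<exists>(VT :: nat set) adjT P. ept_rep V adj VT adjT P \<and> helly_rep V P)"

text \<open>Gates (recursive definition). adj is interpreted only on V.\<close>
inductive gate :: "'a set \<Rightarrow> ('a \<Rightarrow> 'a \<Rightarrow> bool) \<Rightarrow> bool" where
  cycle: "\<lbrakk> distinct xs; 4 \<le> length xs; V = set xs;
            \<forall>x\<in>V. \<forall>y\<in>V. adj x y \<longleftrightarrow> cycle_adj xs x y \<rbrakk> \<Longrightarrow> gate V adj"
| extend: "\<lbrakk> gate V' adj; C \<in> cliques V' adj; C' \<in> cliques V' adj; C \<inter> C' = {};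
             distinct ps; 2 \<le> length ps; set ps \<inter> V' = {}; V = V' \<union> set ps;
             \<forall>x\<in>V. \<forall>y\<in>V. (x \<in> set ps \<or> y \<in> set ps) \<longrightarrow>
               (adj x y \<longleftrightarrow> list_adj ps x y
                  \<or> (x = hd ps \<and> y \<in> C) \<or> (y = hd ps \<and> x \<in> C)
                  \<or> (x = last ps \<and> y \<in> C') \<or> (y = last ps \<and> x \<in> C')) \<rbrakk>
           \<Longrightarrow> gate V adj"

definition k_gate :: "nat \<Rightarrow> 'a set \<Rightarrow> ('a \<Rightarrow> 'a \<Rightarrow> bool) \<Rightarrow> bool" where
  "k_gate k V adj \<longleftrightarrow> gate V adj \<and> card (cliques V adj) = k"

end

theory Submission
  imports Defs "HOL-Library.Transitive_Closure_Table"
begin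


lemma rtp_succ: "rtrancl_path r x xs y \<Longrightarrow> successively r (x#xs) \<and> last (x#xs) = y"
  by (induction rule: rtrancl_path.induct) (auto simp: successively_Cons)

lemma complete_in_clique:
  assumes "finite V" "complete_set V adj X"
  shows "\<exists>K\<in>cliques V adj. X \<subseteq> K"
proof -
  let ?A = "{Y. complete_set V adj Y \<and> X \<subseteq> Y}"
  have fin: "finite ?A"
    by (rule finite_subset[of _ "Pow V"]) (auto simp: complete_set_def assms(1))
  obtain m where m: "m \<in> ?A" "X \<subseteq> m" "\<forall>b\<in>?A. m \<le> b \<longrightarrow> m = b"
    using finite_has_maximal2[OF fin, of X] assms(2) by auto
  have "m \<in> cliques V adj" unfolding cliques_def using m by blast
  then show ?thesis using m by blast
qed

lemma clique_adj: "K \<in> cliques V adj \<Longrightarrow> u \<in> K \<Longrightarrow> w \<in> K \<Longrightarrow> u \<noteq> w \<Longrightarrow> adj u w"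
  by (auto simp: cliques_def complete_set_def)

lemma clique_sub: "K \<in> cliques V adj \<Longrightarrow> K \<subseteq> V"
  by (auto simp: cliques_def complete_set_def)

lemma clique_max: "K \<in> cliques V adj \<Longrightarrow> A \<in> cliques V adj \<Longrightarrow> A \<subseteq> K \<Longrightarrow> A = K"
  by (auto simp: cliques_def)

lemma clique_ne: "K \<in> cliques V adj \<Longrightarrow> v \<in> V \<Longrightarrow> K \<noteq> {}"
proof
  assume "K \<in> cliques V adj" "v \<in> V" "K = {}"
  moreover have "complete_set V adj {v}" using \<open>v \<in> V\<close> by (auto simp: complete_set_def)
  ultimately show False by (auto simp: cliques_def)
qed

lemma graph_irr: "graph V adj \<Longrightarrow> x \<in> V \<Longrightarrow> \<not> adj x x"
  by (auto simp: graph_def)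

lemma graph_sym: "graph V adj \<Longrightarrow> x \<in> V \<Longrightarrow> y \<in> V \<Longrightarrow> adj x y \<Longrightarrow> adj y x"
  by (auto simp: graph_def)

lemma seg_same:
  assumes path: "is_path VT adjT qs"
    and clos: "\<forall>x y. x\<in>VT \<longrightarrow> y\<in>VT \<longrightarrow> adjT x y \<longrightarrow> {x,y} \<noteq> e \<longrightarrow> (x \<in> side \<longleftrightarrow> y \<in> side)"
    and ne: "\<forall>i. m1 \<le> i \<longrightarrow> i < m2 \<longrightarrow> {qs!i, qs!Suc i} \<noteq> e"
    and le: "m1 \<le> m2" and lt: "m2 < length qs"
  shows "qs!m1 \<in> side \<longleftrightarrow> qs!m2 \<in> side"
  using le lt ne
proof (induction m2)
  case 0 then show ?case by simp
next
  case (Suc m)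
  show ?case
  proof (cases "m1 = Suc m")
    case True then show ?thesis by simp
  next
    case False
    then have "m1 \<le> m" using Suc.prems by simp
    then have ih: "qs!m1 \<in> side \<longleftrightarrow> qs!m \<in> side" using Suc by auto
    have "qs!m \<in> VT" "qs!Suc m \<in> VT" "adjT (qs!m) (qs!Suc m)"
      using path Suc.prems by (auto simp: is_path_def)
    moreover have "{qs!m, qs!Suc m} \<noteq> e" using Suc.prems \<open>m1 \<le> m\<close> by auto
    ultimately show ?thesis using ih clos by blast
  qed
qed

lemma path_edges_mem: "e \<in> path_edges qs \<longleftrightarrow> (\<exists>i. Suc i < length qs \<and> e = {qs!i, qs!Suc i})"
  by (auto simp: path_edges_def)

lemma all_same_side:
  assumes path: "is_path VT adjT qs"
    and clos: "\<forall>x y. x\<in>VT \<longrightarrow> y\<in>VT \<longrightarrow> adjT x y \<longrightarrow> {x,y} \<noteq> e \<longrightarrow> (x \<in> side \<longleftrightarrow> y \<in> side)"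
    and ne: "e \<notin> path_edges qs" and p: "p \<in> set qs"
  shows "p \<in> side \<longleftrightarrow> qs!0 \<in> side"
proof -
  obtain m where m: "m < length qs" "qs!m = p" using p by (auto simp: in_set_conv_nth)
  have "\<forall>i. 0 \<le> i \<longrightarrow> i < m \<longrightarrow> {qs!i, qs!Suc i} \<noteq> e"
  proof (intro allI impI)
    fix i assume "0 \<le> i" "i < m"
    then have "Suc i < length qs" using m by simp
    then show "{qs!i, qs!Suc i} \<noteq> e" using ne by (auto simp: path_edges_mem)
  qed
  from seg_same[OF path clos this _ m(1)] m show ?thesis by simp
qed

lemma distinct_edge_pos:
  assumes "distinct ps" "i < j" "Suc j < length ps"
  shows "{ps!i, ps!Suc i} \<noteq> {ps!j, ps!Suc j}"
proof
  assume "{ps!i, ps!Suc i} = {ps!j, ps!Suc j}"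
  then have "ps!i = ps!j \<or> ps!i = ps!Suc j" by auto
  then show False using assms by (auto simp: nth_eq_iff_index_eq)
qed

lemma tree_no_bypass:
  assumes tree: "is_tree VT adjT" and path: "is_path VT adjT ps" and j: "Suc j < length ps"
  defines "R \<equiv> \<lambda>x y. x \<in> VT \<and> y \<in> VT \<and> adjT x y \<and> {x,y} \<noteq> {ps!j, ps!Suc j}"
  shows "\<not> R\<^sup>*\<^sup>* (ps!j) (ps!Suc j)"
proof
  assume "R\<^sup>*\<^sup>* (ps!j) (ps!Suc j)"
  then obtain xs where "rtrancl_path R (ps!j) xs (ps!Suc j)"
    by (auto simp: rtranclp_eq_rtrancl_path)
  then obtain xs' where xs': "rtrancl_path R (ps!j) xs' (ps!Suc j)" "distinct (ps!j # xs')"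
    by (rule rtrancl_path_distinct)
  define cyc where "cyc = ps!j # xs'"
  have sc: "successively R cyc" and lst: "last cyc = ps!Suc j"
    using rtp_succ[OF xs'(1)] by (auto simp: cyc_def)
  have dist: "distinct cyc" using xs' by (simp add: cyc_def)
  have jne: "ps!j \<noteq> ps!Suc j" using path j by (auto simp: is_path_def nth_eq_iff_index_eq)
  have "xs' \<noteq> []" using lst jne by (auto simp: cyc_def)
  have len3: "3 \<le> length cyc"
  proof (rule ccontr)
    assume "\<not> 3 \<le> length cyc"
    then have "length xs' = 1" using \<open>xs' \<noteq> []\<close> by (cases xs') (auto simp: cyc_def, simp add: Suc_le_eq)
    then obtain y where "xs' = [y]" by (auto simp: length_Suc_conv)
    then show False using sc lst by (auto simp: cyc_def R_def)
  qed
  have VTj: "ps!j \<in> VT" "ps!Suc j \<in> VT" and aj: "adjT (ps!j) (ps!Suc j)"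
    using path j by (auto simp: is_path_def)
  have gT: "graph VT adjT" using tree by (simp add: is_tree_def)
  have setc: "set cyc \<subseteq> VT"
  proof
    fix x assume "x \<in> set cyc"
    then obtain i where i: "i < length cyc" "cyc!i = x" by (auto simp: in_set_conv_nth)
    show "x \<in> VT"
    proof (cases i)
      case 0 then show ?thesis using i VTj by (simp add: cyc_def)
    next
      case (Suc m)
      have "R (cyc!m) (cyc!Suc m)" using successively_nth[OF sc, of m] i Suc by simp
      then show ?thesis using i Suc by (simp add: R_def)
    qed
  qed
  have adjc: "\<forall>i < length cyc. adjT (cyc ! i) (cyc ! ((Suc i) mod length cyc))"
  proof (intro allI impI)
    fix i assume i: "i < length cyc"
    show "adjT (cyc ! i) (cyc ! ((Suc i) mod length cyc))"
    proof (cases "Suc i < length cyc")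
      case True
      then show ?thesis using successively_nth[OF sc True] by (simp add: R_def)
    next
      case False
      then have "Suc i = length cyc" using i by simp
      then have "cyc ! i = last cyc" using last_conv_nth[of cyc] \<open>xs' \<noteq> []\<close>
        by (auto simp: cyc_def)
      moreover have "cyc ! ((Suc i) mod length cyc) = ps!j"
        using \<open>Suc i = length cyc\<close> by (simp add: cyc_def)
      ultimately show ?thesis using lst graph_sym[OF gT VTj(1) VTj(2) aj] by simp
    qed
  qed
  show False using tree dist len3 setc adjc by (auto simp: is_tree_def)
qed


lemma two_elems: "2 \<le> card A \<Longrightarrow> \<exists>a\<in>A. \<exists>b\<in>A. a \<noteq> b"
proof -
  assume c: "2 \<le> card A"
  then have f: "finite A" using card.infinite by fastforce
  have "\<not> card A \<le> Suc 0" using c by simp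
  then show ?thesis using card_le_Suc0_iff_eq[OF f] by blast
qed

lemma three_elems: "3 \<le> card A \<Longrightarrow> \<exists>a\<in>A. \<exists>b\<in>A. \<exists>c\<in>A. a \<noteq> b \<and> a \<noteq> c \<and> b \<noteq> c"
proof -
  assume c: "3 \<le> card A"
  then have "finite A" "A \<noteq> {}" using card.infinite by fastforce+
  then obtain a where a: "a \<in> A" by auto
  have "2 \<le> card (A - {a})" using c a \<open>finite A\<close> by (simp add: card_Diff_singleton)
  then obtain b c where "b \<in> A - {a}" "c \<in> A - {a}" "b \<noteq> c" using two_elems by blast
  then show ?thesis using a by blast
qed

locale hept =
  fixes V :: "'a set" and adj :: "'a \<Rightarrow> 'a \<Rightarrow> bool"
    and VT :: "'b set" and adjT :: "'b \<Rightarrow> 'b \<Rightarrow> bool" and P :: "'a \<Rightarrow> 'b list"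
  assumes g: "graph V adj" and rep: "ept_rep V adj VT adjT P" and hel: "helly_rep V P"
    and at: "atom V adj" and two: "2 \<le> card (cliques V adj)"
begin

lemma tree: "is_tree VT adjT" using rep by (simp add: ept_rep_def)
lemma pth: "v \<in> V \<Longrightarrow> is_path VT adjT (P v)" using rep by (simp add: ept_rep_def)
lemma adj_pe: "v \<in> V \<Longrightarrow> w \<in> V \<Longrightarrow> v \<noteq> w \<Longrightarrow> adj v w \<longleftrightarrow> path_edges (P v) \<inter> path_edges (P w) \<noteq> {}"
  using rep by (simp add: ept_rep_def)

lemma conn: "connected_graph V adj" using at by (simp add: atom_def)

lemma pe_ne: assumes v: "v \<in> V" shows "path_edges (P v) \<noteq> {}"
proof -
  obtain K1 K2 where K: "K1 \<in> cliques V adj" "K2 \<in> cliques V adj" "K1 \<noteq> K2"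
    using two_elems[OF two] by blast
  have "\<exists>u\<in>V. u \<noteq> v"
  proof (rule ccontr)
    assume "\<not> (\<exists>u\<in>V. u \<noteq> v)"
    then have "V \<subseteq> {v}" by auto
    moreover have "K1 \<subseteq> V" "K2 \<subseteq> V" "K1 \<noteq> {}" "K2 \<noteq> {}" using clique_sub[OF K(1)] clique_sub[OF K(2)]
        clique_ne[OF K(1) v] clique_ne[OF K(2) v] by auto
    ultimately have "K1 = {v}" "K2 = {v}" by blast+
    then show False using K by simp
  qed
  then obtain u where u: "u \<in> V" "u \<noteq> v" by blast
  have "(\<lambda>a b. a \<in> V \<and> b \<in> V \<and> adj a b)\<^sup>*\<^sup>* v u" using conn v u by (auto simp: connected_graph_def)
  then obtain w where w: "w \<in> V" "adj v w"
    using u(2) by (cases rule: converse_rtranclpE) auto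
  have "v \<noteq> w" using graph_irr[OF g v] w by auto
  then show ?thesis using adj_pe[OF v w(1)] w by auto
qed

lemma clique_edge:
  assumes K: "K \<in> cliques V adj"
  shows "\<exists>e. \<forall>v\<in>V. v \<in> K \<longleftrightarrow> e \<in> path_edges (P v)"
proof -
  have KV: "K \<subseteq> V" using clique_sub[OF K] .
  have "V \<noteq> {}" using conn by (simp add: connected_graph_def)
  then have Kne: "K \<noteq> {}" using clique_ne[OF K] by auto
  have pw: "\<forall>v\<in>K. \<forall>w\<in>K. path_edges (P v) \<inter> path_edges (P w) \<noteq> {}"
  proof (intro ballI)
    fix v w assume "v \<in> K" "w \<in> K"
    show "path_edges (P v) \<inter> path_edges (P w) \<noteq> {}"
    proof (cases "v = w")
      case True then show ?thesis using pe_ne \<open>v \<in> K\<close> KV by auto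
    next
      case False
      then have "adj v w" using clique_adj[OF K \<open>v \<in> K\<close> \<open>w \<in> K\<close>] by simp
      then show ?thesis using adj_pe \<open>v \<in> K\<close> \<open>w \<in> K\<close> KV False by auto
    qed
  qed
  have "(\<Inter>v\<in>K. path_edges (P v)) \<noteq> {}"
    using hel[unfolded helly_rep_def, rule_format, OF KV Kne] pw by blast
  then obtain e where e: "e \<in> (\<Inter>v\<in>K. path_edges (P v))" by blast
  define K' where "K' = {w\<in>V. e \<in> path_edges (P w)}"
  have "complete_set V adj K'"
    unfolding complete_set_def
  proof (intro conjI ballI impI)
    show "K' \<subseteq> V" by (auto simp: K'_def)
    fix x y assume "x \<in> K'" "y \<in> K'" "x \<noteq> y"
    then show "adj x y" using adj_pe[of x y] by (auto simp: K'_def)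
  qed
  moreover have "K \<subseteq> K'" using e KV by (auto simp: K'_def)
  ultimately have "K' = K" using K by (auto simp: cliques_def)
  then show ?thesis by (auto simp: K'_def)
qed

definition good :: "'a \<Rightarrow> 'a set \<Rightarrow> nat \<Rightarrow> bool" where
  "good v X p \<longleftrightarrow> X \<in> cliques V adj \<and> Suc p < length (P v) \<and>
     (\<forall>w\<in>V. w \<in> X \<longleftrightarrow> {P v ! p, P v ! Suc p} \<in> path_edges (P w))"

lemma core:
  assumes v: "v \<in> V" and g1: "good v X1 p1" and g2: "good v X2 p2" and g3: "good v X3 p3"
    and n12: "X1 \<noteq> X2" and n32: "X3 \<noteq> X2" and lt: "p1 < p2" "p2 < p3"
  shows False
proof -
  define ps where "ps = P v"
  have path: "is_path VT adjT ps" using pth[OF v] by (simp add: ps_def)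
  define e where "e = {ps!p2, ps!Suc p2}"
  define R where "R = (\<lambda>x y. x \<in> VT \<and> y \<in> VT \<and> adjT x y \<and> {x,y} \<noteq> {ps!p2, ps!Suc p2})"
  define side where "side = {x. R\<^sup>*\<^sup>* (ps!p2) x}"
  have gT: "graph VT adjT" using tree by (simp add: is_tree_def)
  have clos: "\<forall>x y. x\<in>VT \<longrightarrow> y\<in>VT \<longrightarrow> adjT x y \<longrightarrow> {x,y} \<noteq> e \<longrightarrow> (x \<in> side \<longleftrightarrow> y \<in> side)"
  proof (intro allI impI)
    fix x y assume xy: "x \<in> VT" "y \<in> VT" "adjT x y" "{x,y} \<noteq> e"
    have "R x y" using xy by (simp add: R_def e_def)
    moreover have "R y x" using xy graph_sym[OF gT] by (auto simp: R_def e_def insert_commute)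
    ultimately show "x \<in> side \<longleftrightarrow> y \<in> side"
      unfolding side_def mem_Collect_eq by (metis rtranclp.rtrancl_into_rtrancl)
  qed
  have len3: "Suc p3 < length ps" using g3 by (simp add: good_def ps_def)
  have dps: "distinct ps" using path by (simp add: is_path_def)
  have s1: "ps!p1 \<in> side"
  proof -
    have "\<forall>i. p1 \<le> i \<longrightarrow> i < p2 \<longrightarrow> {ps!i, ps!Suc i} \<noteq> e"
    proof (intro allI impI)
      fix i assume "p1 \<le> i" "i < p2"
      have "Suc p2 < length ps" using lt len3 by simp
      then show "{ps!i, ps!Suc i} \<noteq> e" using distinct_edge_pos[OF dps \<open>i < p2\<close>] by (simp add: e_def)
    qed
    then have "ps!p1 \<in> side \<longleftrightarrow> ps!p2 \<in> side"
      using seg_same[OF path clos] lt len3 by simp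
    then show ?thesis by (simp add: side_def)
  qed
  have s3: "ps!p3 \<notin> side"
  proof -
    have "\<forall>i. Suc p2 \<le> i \<longrightarrow> i < p3 \<longrightarrow> {ps!i, ps!Suc i} \<noteq> e"
    proof (intro allI impI)
      fix i assume "Suc p2 \<le> i" "i < p3"
      then have "p2 < i" "Suc i < length ps" using len3 by auto
      from distinct_edge_pos[OF dps this] show "{ps!i, ps!Suc i} \<noteq> e" unfolding e_def by metis
    qed
    then have "ps!Suc p2 \<in> side \<longleftrightarrow> ps!p3 \<in> side"
      using seg_same[OF path clos] lt len3 by simp
    moreover have "ps!Suc p2 \<notin> side"
      using tree_no_bypass[OF tree path, of p2] lt len3 by (simp add: side_def R_def)
    ultimately show ?thesis by simp
  qed
  have X1: "X1 \<in> cliques V adj" and X2: "X2 \<in> cliques V adj" and X3: "X3 \<in> cliques V adj"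
    using g1 g2 g3 by (auto simp: good_def)
  obtain x where x: "x \<in> X1" "x \<notin> X2" using clique_max[OF X2 X1] n12 by blast
  obtain y where y: "y \<in> X3" "y \<notin> X2" using clique_max[OF X2 X3] n32 by blast
  have xV: "x \<in> V" and yV: "y \<in> V" using x y clique_sub[OF X1] clique_sub[OF X3] by auto
  have avoid: "\<And>w. w \<in> V \<Longrightarrow> w \<notin> X2 \<Longrightarrow> e \<notin> path_edges (P w)"
    using g2 by (auto simp: good_def e_def ps_def)
  have inset: "\<And>a b qs. {a,b} \<in> path_edges qs \<Longrightarrow> a \<in> set qs"
    by (auto simp: path_edges_mem doubleton_eq_iff)
  have sx: "P x ! 0 \<in> side"
  proof -
    have "{ps!p1, ps!Suc p1} \<in> path_edges (P x)" using g1 x xV by (auto simp: good_def ps_def)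
    then have "ps!p1 \<in> set (P x)" by (rule inset)
    then show ?thesis using all_same_side[OF pth[OF xV] clos avoid[OF xV x(2)]] s1 by simp
  qed
  have sy: "P y ! 0 \<notin> side"
  proof -
    have "{ps!p3, ps!Suc p3} \<in> path_edges (P y)" using g3 y yV by (auto simp: good_def ps_def)
    then have "ps!p3 \<in> set (P y)" by (rule inset)
    then show ?thesis using all_same_side[OF pth[OF yV] clos avoid[OF yV y(2)]] s3 by simp
  qed
  have "\<not> clique_separator V adj X2" using at by (simp add: atom_def)
  then have "connected_graph (V - X2) adj" using X2 xV x by (auto simp: clique_separator_def)
  then have "(\<lambda>a b. a \<in> V - X2 \<and> b \<in> V - X2 \<and> adj a b)\<^sup>*\<^sup>* x y"
    using xV x yV y by (auto simp: connected_graph_def)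
  then have "P y ! 0 \<in> side"
  proof (induction rule: rtranclp_induct)
    case base then show ?case using sx .
  next
    case (step z z')
    then have z: "z \<in> V" "z \<notin> X2" and z': "z' \<in> V" "z' \<notin> X2" and a: "adj z z'" by auto
    have "z \<noteq> z'" using graph_irr[OF g z(1)] a by auto
    then obtain f where f: "f \<in> path_edges (P z)" "f \<in> path_edges (P z')"
      using adj_pe[OF z(1) z'(1)] a by auto
    then obtain i where i: "Suc i < length (P z)" "f = {P z ! i, P z ! Suc i}"
      by (auto simp: path_edges_mem)
    define q where "q = P z ! i"
    have q1: "q \<in> set (P z)" using i by (simp add: q_def)
    have q2: "q \<in> set (P z')" using f(2) i inset[of q "P z ! Suc i" "P z'"] by (simp add: q_def)
    show ?case using all_same_side[OF pth[OF z(1)] clos avoid[OF z] q1]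
        all_same_side[OF pth[OF z'(1)] clos avoid[OF z'] q2] step.IH by simp
  qed
  then show False using sy by simp
qed

lemma le2:
  assumes v: "v \<in> V" shows "card {K\<in>cliques V adj. v \<in> K} \<le> 2"
proof (rule ccontr)
  assume nt: "\<not> card {K\<in>cliques V adj. v \<in> K} \<le> 2"
  define SS where "SS = {K\<in>cliques V adj. v \<in> K}"
  have "3 \<le> card SS" using nt by (simp add: SS_def)
  from three_elems[OF this] obtain A B C where ABC0: "A \<in> SS" "B \<in> SS" "C \<in> SS"
    "A \<noteq> B" "A \<noteq> C" "B \<noteq> C" by blast
  have ABC: "A \<in> cliques V adj" "v \<in> A" "B \<in> cliques V adj" "v \<in> B"
    "C \<in> cliques V adj" "v \<in> C" "A \<noteq> B" "A \<noteq> C" "B \<noteq> C"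
    using ABC0 by (simp_all add: SS_def)
  have pos: "\<exists>p. good v X p" if X: "X \<in> cliques V adj" "v \<in> X" for X
  proof -
    obtain e where e: "\<forall>w\<in>V. w \<in> X \<longleftrightarrow> e \<in> path_edges (P w)" using clique_edge[OF X(1)] by blast
    then have "e \<in> path_edges (P v)" using v X by auto
    then obtain p where p: "Suc p < length (P v)" "e = {P v ! p, P v ! Suc p}" by (auto simp: path_edges_mem)
    have "good v X p" unfolding good_def using p e X(1) by simp
    then show ?thesis by blast
  qed
  obtain i where gi: "good v A i" using pos ABC by blast
  obtain j where gj: "good v B j" using pos ABC by blast
  obtain l where gl: "good v C l" using pos ABC by blast
  have neq: "p \<noteq> q" if "good v X p" "good v Y q" "X \<noteq> Y" for X Y p q
  proof
    assume "p = q"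
    then have "\<forall>w\<in>V. w \<in> X \<longleftrightarrow> w \<in> Y" using that by (auto simp: good_def)
    moreover have "X \<subseteq> V" "Y \<subseteq> V" using that clique_sub by (auto simp: good_def)
    ultimately show False using that(3) by blast
  qed
  have ij: "i \<noteq> j" using neq[OF gi gj] ABC(7) by blast
  have il: "i \<noteq> l" using neq[OF gi gl] ABC(8) by blast
  have jl: "j \<noteq> l" using neq[OF gj gl] ABC(9) by blast
  consider "i < j \<and> j < l" | "i < l \<and> l < j" | "j < i \<and> i < l" | "j < l \<and> l < i"
    | "l < i \<and> i < j" | "l < j \<and> j < i"
  proof (cases "i < j")
    case True
    then show ?thesis using that il jl by (cases "j < l"; cases "i < l") auto
  next
    case False
    then show ?thesis using that il jl ij by (cases "j < l"; cases "i < l") auto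
  qed
  then show False
  proof cases
    case 1 then show ?thesis using core[OF v gi gj gl] ABC(7,8,9) by (auto simp: eq_commute)
  next
    case 2 then show ?thesis using core[OF v gi gl gj] ABC(7,8,9) by (auto simp: eq_commute)
  next
    case 3 then show ?thesis using core[OF v gj gi gl] ABC(7,8,9) by (auto simp: eq_commute)
  next
    case 4 then show ?thesis using core[OF v gj gl gi] ABC(7,8,9) by (auto simp: eq_commute)
  next
    case 5 then show ?thesis using core[OF v gl gi gj] ABC(7,8,9) by (auto simp: eq_commute)
  next
    case 6 then show ?thesis using core[OF v gl gj gi] ABC(7,8,9) by (auto simp: eq_commute)
  qed
qed

end


fun edg :: "'n list \<Rightarrow> 'n set set" where
  "edg (a # b # xs) = insert {a,b} (edg (b # xs))"
| "edg _ = {}"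

lemma edg_append: "edg (xs @ y # ys) = edg (xs @ [y]) \<union> edg (y # ys)"
proof (induction xs)
  case Nil then show ?case by simp
next
  case (Cons a xs)
  then show ?case by (cases xs) auto
qed

lemma edg_sub_set: "e \<in> edg xs \<Longrightarrow> e \<subseteq> set xs"
  by (induction xs rule: edg.induct) auto

lemma edg_split: "{a,b} \<in> edg xs \<Longrightarrow> \<exists>ys zs. xs = ys @ a # b # zs \<or> xs = ys @ b # a # zs"
proof (induction xs rule: edg.induct)
  case (1 x y rest)
  show ?case
  proof (cases "{a,b} = {x,y}")
    case True
    then have "(a = x \<and> b = y) \<or> (a = y \<and> b = x)" by (auto simp: doubleton_eq_iff)
    then show ?thesis by (metis append_Nil)
  next
    case False
    then have "{a,b} \<in> edg (y # rest)" using 1(2) by simp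
    then obtain ys zs where "y # rest = ys @ a # b # zs \<or> y # rest = ys @ b # a # zs" using 1(1) by blast
    then show ?thesis by (metis append_Cons)
  qed
qed auto

lemma edg_R: "successively R xs \<Longrightarrow> e \<in> edg xs \<Longrightarrow> \<exists>a b. e = {a,b} \<and> R a b"
  by (induction xs rule: edg.induct) auto

lemma edg_mid: "zs \<noteq> [] \<Longrightarrow> e \<in> edg (x # zs @ [y]) \<Longrightarrow> e \<inter> set zs \<noteq> {}"
proof (induction zs arbitrary: x)
  case Nil then show ?case by simp
next
  case (Cons z zs)
  show ?case
  proof (cases "e = {x,z}")
    case True then show ?thesis by auto
  next
    case False
    then have "e \<in> edg (z # zs @ [y])" using Cons.prems by simp
    then show ?thesis using Cons.IH by (cases zs) auto
  qed
qed

lemma edg_subdiv: "ds \<noteq> [] \<Longrightarrow> edg (xs @ a # ds @ b # ys) \<subseteq> edg (xs @ a # b # ys) \<union> {e. e \<inter> set ds \<noteq> {}}"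
proof -
  assume ds: "ds \<noteq> []"
  have 1: "edg (xs @ a # ds @ b # ys) = edg (xs @ [a]) \<union> edg (a # ds @ [b]) \<union> edg (b # ys)"
    using edg_append[of xs a "ds @ b # ys"] edg_append[of "a # ds" b ys] by (simp add: Un_assoc)
  have 2: "edg (xs @ a # b # ys) = edg (xs @ [a]) \<union> edg [a,b] \<union> edg (b # ys)"
    using edg_append[of xs a "b # ys"] edg_append[of "[a]" b ys] by (simp add: Un_assoc)
  show ?thesis unfolding 1 2 using edg_mid[OF ds, of _ a b] by blast
qed

definition nodes :: "'n list list \<Rightarrow> 'n set" where
  "nodes es = \<Union> (set ` set es)"

definition EE :: "'n list list \<Rightarrow> 'n set set" where
  "EE es = \<Union> (edg ` set es)"

definition cyc :: "'n list \<Rightarrow> bool" where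
  "cyc c \<longleftrightarrow> 5 \<le> length c \<and> hd c = last c \<and> distinct (butlast c)"

definition ear :: "'n list list \<Rightarrow> 'n list \<Rightarrow> bool" where
  "ear es ns \<longleftrightarrow> 3 \<le> length ns \<and> distinct ns \<and> hd ns \<in> nodes es \<and> last ns \<in> nodes es
     \<and> {hd ns, last ns} \<notin> EE es \<and> (\<forall>x\<in>set ns. x \<noteq> hd ns \<longrightarrow> x \<noteq> last ns \<longrightarrow> x \<notin> nodes es)"

inductive valid :: "'n list list \<Rightarrow> bool" where
  base: "cyc c \<Longrightarrow> valid [c]"
| step: "valid es \<Longrightarrow> ear es ns \<Longrightarrow> valid (es @ [ns])"

lemma nodes_append[simp]: "nodes (xs @ ys) = nodes xs \<union> nodes ys"
  by (auto simp: nodes_def)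
lemma nodes_Cons[simp]: "nodes (x # ys) = set x \<union> nodes ys"
  by (auto simp: nodes_def)
lemma nodes_Nil[simp]: "nodes [] = {}"
  by (auto simp: nodes_def)
lemma EE_append[simp]: "EE (xs @ ys) = EE xs \<union> EE ys"
  by (auto simp: EE_def)
lemma EE_Cons[simp]: "EE (x # ys) = edg x \<union> EE ys"
  by (auto simp: EE_def)
lemma EE_Nil[simp]: "EE [] = {}"
  by (auto simp: EE_def)

lemma nodes_update:
  assumes "j < length es" "set new = set (es!j) \<union> D"
  shows "nodes (es[j:=new]) = nodes es \<union> D"
proof -
  have "es = take j es @ es!j # drop (Suc j) es" using assms(1) by (simp add: id_take_nth_drop)
  then have "nodes es = nodes (take j es) \<union> set (es!j) \<union> nodes (drop (Suc j) es)"
    by (metis nodes_Cons nodes_append sup_assoc)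
  moreover have "es[j:=new] = take j es @ new # drop (Suc j) es" using assms(1) by (simp add: upd_conv_take_nth_drop)
  ultimately show ?thesis using assms(2) by auto
qed

lemma EE_update:
  assumes "j < length es" "edg new \<subseteq> edg (es!j) \<union> F"
  shows "EE (es[j:=new]) \<subseteq> EE es \<union> F"
proof -
  have "es = take j es @ es!j # drop (Suc j) es" using assms(1) by (simp add: id_take_nth_drop)
  then have "EE es = EE (take j es) \<union> edg (es!j) \<union> EE (drop (Suc j) es)"
    by (metis EE_Cons EE_append sup_assoc)
  moreover have "es[j:=new] = take j es @ new # drop (Suc j) es" using assms(1) by (simp add: upd_conv_take_nth_drop)
  ultimately show ?thesis using assms(2) by auto
qed

lemma nodes_nth: "j < length es \<Longrightarrow> set (es!j) \<subseteq> nodes es"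
  unfolding nodes_def using nth_mem by blast

lemma valid_subdiv:
  assumes "valid es" "j < length es" "es!j = xs @ a # b # ys" "ds \<noteq> []" "distinct ds"
    "set ds \<inter> nodes es = {}"
  shows "valid (es[j := xs @ a # ds @ b # ys])"
  using assms
proof (induction arbitrary: j rule: valid.induct)
  case (base c)
  then have j: "j = 0" and c: "c = xs @ a # b # ys" by auto
  have cc: "cyc c" using base by simp
  have dc: "set ds \<inter> set c = {}" using base by simp
  define new where "new = xs @ a # ds @ b # ys"
  have "cyc new"
    unfolding cyc_def
  proof (intro conjI)
    show "5 \<le> length new" using cc c by (simp add: cyc_def new_def)
    have "hd new = hd c" "last new = last c" using c by (simp_all add: new_def hd_append)
    then show "hd new = last new" using cc by (simp add: cyc_def)
    have "butlast c = xs @ a # butlast (b # ys)" using c by (simp add: butlast_append)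
    moreover have "butlast new = xs @ a # ds @ butlast (b # ys)" by (simp add: new_def butlast_append)
    moreover have "set (butlast (b # ys)) \<subseteq> set c" using c by (auto dest: in_set_butlastD)
    ultimately show "distinct (butlast new)" using cc dc base.prems(4) c by (auto simp: cyc_def)
  qed
  then show ?case using j by (simp add: new_def valid.base)
next
  case (step es ns)
  define new where "new = xs @ a # ds @ b # ys"
  have dsn: "set ds \<inter> nodes es = {}" "set ds \<inter> set ns = {}" using step.prems(5) by auto
  have ear: "ear es ns" using step.hyps by simp
  show ?case
  proof (cases "j < length es")
    case True
    have upd: "(es @ [ns])[j := new] = es[j := new] @ [ns]" using True by (simp add: list_update_append1)
    have ej: "es!j = xs @ a # b # ys" using True step.prems(2) by (simp add: nth_append)
    have v': "valid (es[j := new])" using step.IH[OF True ej step.prems(3,4) dsn(1)] by (simp add: new_def)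
    have setnew: "set new = set (es!j) \<union> set ds" using ej by (auto simp: new_def)
    have nd: "nodes (es[j:=new]) = nodes es \<union> set ds" using nodes_update[OF True setnew] .
    have ee: "EE (es[j:=new]) \<subseteq> EE es \<union> {e. e \<inter> set ds \<noteq> {}}"
      using EE_update[OF True] edg_subdiv[OF step.prems(3), of xs a b ys] ej by (simp add: new_def)
    have hl: "hd ns \<in> nodes es" "last ns \<in> nodes es" using ear by (auto simp: ear_def)
    have "hd ns \<notin> set ds" "last ns \<notin> set ds" using hl dsn by auto
    then have "{hd ns, last ns} \<notin> EE (es[j:=new])" using ee ear by (auto simp: ear_def)
    moreover have "\<forall>x\<in>set ns. x \<noteq> hd ns \<longrightarrow> x \<noteq> last ns \<longrightarrow> x \<notin> nodes (es[j:=new])"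
      using ear dsn nd by (auto simp: ear_def)
    ultimately have "ear (es[j:=new]) ns" using ear nd by (auto simp: ear_def)
    then show ?thesis using v' upd by (simp add: new_def valid.step)
  next
    case False
    then have j: "j = length es" using step.prems(1) by simp
    then have nsx: "ns = xs @ a # b # ys" using step.prems(2) by simp
    have upd: "(es @ [ns])[j := new] = es @ [new]" using j by simp
    have "ear es new"
      unfolding ear_def
    proof (intro conjI)
      show "3 \<le> length new" using ear nsx by (simp add: ear_def new_def)
      show "distinct new" using ear nsx dsn step.prems(4) by (auto simp: ear_def new_def)
      have hd: "hd new = hd ns" and lst: "last new = last ns" using nsx by (simp_all add: new_def hd_append)
      show "hd new \<in> nodes es" "last new \<in> nodes es" "{hd new, last new} \<notin> EE es"
        using ear hd lst by (auto simp: ear_def)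
      show "\<forall>x\<in>set new. x \<noteq> hd new \<longrightarrow> x \<noteq> last new \<longrightarrow> x \<notin> nodes es"
        using ear hd lst nsx dsn by (auto simp: ear_def new_def)
    qed
    then show ?thesis using upd step.hyps(1) by (simp add: new_def valid.step)
  qed
qed


lemma succ_all: "successively R (x#xs) \<Longrightarrow> P x \<Longrightarrow> (\<forall>u v. R u v \<longrightarrow> P v) \<Longrightarrow> \<forall>y\<in>set (x#xs). P y"
  by (induction xs arbitrary: x) (auto simp: successively_Cons)

lemma rtp_crossing: "R\<^sup>*\<^sup>* x y \<Longrightarrow> x \<notin> N \<Longrightarrow> y \<in> N \<Longrightarrow> \<exists>u v. R u v \<and> u \<notin> N \<and> v \<in> N"
  by (induction rule: rtranclp_induct) auto

lemma succ_subdiv: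
  assumes "successively R (ys @ a # b # zs)" "successively R (a # ds @ [b])"
  shows "successively R (ys @ a # ds @ b # zs)"
proof -
  have 1: "successively R ys" "successively R (a # b # zs)" "ys = [] \<or> R (last ys) a"
    using assms(1) successively_append_iff[of R ys "a # b # zs"] by auto
  have 2: "successively R (b # zs)" using 1(2) by simp
  have 3: "successively R (a # ds)" "R (last (a # ds)) b"
    using assms(2) successively_append_iff[of R "a # ds" "[b]"] by auto
  have "successively R ((a # ds) @ (b # zs))"
    using 2 3 successively_append_iff[of R "a # ds" "b # zs"] by simp
  then have "successively R (a # ds @ b # zs)" by simp
  then show ?thesis using 1 successively_append_iff[of R ys "a # ds @ b # zs"] by auto
qed

locale lg =
  fixes V :: "'a set" and adj :: "'a \<Rightarrow> 'a \<Rightarrow> bool"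
  assumes g: "graph V adj" and at: "atom V adj"
    and le2: "\<forall>v\<in>V. card {K\<in>cliques V adj. v \<in> K} \<le> 2"
    and k4: "4 \<le> card (cliques V adj)"
begin

definition cl :: "'a \<Rightarrow> 'a set set" where
  "cl v = {K\<in>cliques V adj. v \<in> K}"

definition Medge :: "'a set \<Rightarrow> 'a set \<Rightarrow> bool" where
  "Medge A B \<longleftrightarrow> A \<noteq> B \<and> (\<exists>v\<in>V. cl v = {A,B})"

lemma finV: "finite V" using g by (simp add: graph_def)
lemma fincl: "finite (cliques V adj)"
  by (rule finite_subset[of _ "Pow V"]) (auto simp: cliques_def complete_set_def finV)

lemma cl_ne: "v \<in> V \<Longrightarrow> cl v \<noteq> {}"
proof -
  assume v: "v \<in> V"
  have "complete_set V adj {v}" using v by (auto simp: complete_set_def)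
  then obtain K where "K \<in> cliques V adj" "{v} \<subseteq> K" using complete_in_clique[OF finV] by blast
  then show ?thesis by (auto simp: cl_def)
qed

lemma cl_two: "v \<in> V \<Longrightarrow> A \<in> cl v \<Longrightarrow> B \<in> cl v \<Longrightarrow> A \<noteq> B \<Longrightarrow> cl v = {A,B}"
proof -
  assume v: "v \<in> V" "A \<in> cl v" "B \<in> cl v" "A \<noteq> B"
  have fin: "finite (cl v)" using fincl by (simp add: cl_def)
  have c: "card (cl v) \<le> 2" using le2 v(1) by (simp add: cl_def)
  have sub: "{A,B} \<subseteq> cl v" using v by auto
  have "card {A,B} = 2" using v(4) by simp
  then have "card (cl v) = card {A,B}" using card_mono[OF fin sub] c by simp
  then show ?thesis using card_subset_eq[OF fin sub] by simp
qed

lemma cl_sub: "cl v \<subseteq> cliques V adj" by (auto simp: cl_def)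

lemma adj_iff: "x \<in> V \<Longrightarrow> y \<in> V \<Longrightarrow> adj x y \<longleftrightarrow> x \<noteq> y \<and> cl x \<inter> cl y \<noteq> {}"
proof
  assume xy: "x \<in> V" "y \<in> V" "adj x y"
  have ne: "x \<noteq> y" using graph_irr[OF g xy(1)] xy by auto
  have "complete_set V adj {x,y}" using xy graph_sym[OF g] by (auto simp: complete_set_def)
  then obtain K where "K \<in> cliques V adj" "{x,y} \<subseteq> K" using complete_in_clique[OF finV] by blast
  then show "x \<noteq> y \<and> cl x \<inter> cl y \<noteq> {}" using ne by (auto simp: cl_def)
next
  assume "x \<noteq> y \<and> cl x \<inter> cl y \<noteq> {}"
  then obtain K where "x \<noteq> y" "K \<in> cliques V adj" "x \<in> K" "y \<in> K" by (auto simp: cl_def)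
  then show "adj x y" using clique_adj by metis
qed

lemma tri:
  assumes "x \<in> V" "y \<in> V" "z \<in> V" "adj x y" "adj y z" "adj x z"
  shows "cl x \<inter> cl y \<inter> cl z \<noteq> {}"
proof -
  have "complete_set V adj {x,y,z}" using assms graph_sym[OF g] by (auto simp: complete_set_def)
  then obtain K where "K \<in> cliques V adj" "{x,y,z} \<subseteq> K" using complete_in_clique[OF finV] by blast
  then show ?thesis by (auto simp: cl_def)
qed

lemma Medge_sym: "Medge A B \<longleftrightarrow> Medge B A"
  by (auto simp: Medge_def insert_commute)

lemma Medge_cl: "Medge A B \<Longrightarrow> A \<in> cliques V adj \<and> B \<in> cliques V adj"
  using cl_sub by (auto simp: Medge_def)

lemma triangle_free: "Medge a d \<Longrightarrow> Medge d b \<Longrightarrow> Medge a b \<Longrightarrow> False"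
proof -
  assume m: "Medge a d" "Medge d b" "Medge a b"
  obtain u where u: "u \<in> V" "cl u = {a,d}" using m(1) by (auto simp: Medge_def)
  obtain w where w: "w \<in> V" "cl w = {d,b}" using m(2) by (auto simp: Medge_def)
  obtain y where y: "y \<in> V" "cl y = {a,b}" using m(3) by (auto simp: Medge_def)
  have ne: "a \<noteq> d" "d \<noteq> b" "a \<noteq> b" using m by (auto simp: Medge_def)
  have "u \<noteq> w" "w \<noteq> y" "u \<noteq> y" using u w y ne by (auto simp: doubleton_eq_iff)
  then have "adj u w" "adj w y" "adj u y" using u w y adj_iff by auto
  from tri[OF u(1) w(1) y(1) this] show False using u w y ne by auto
qed

lemma sepK:
  assumes K: "K \<in> cliques V adj" and A: "A \<in> cliques V adj" and B: "B \<in> cliques V adj"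
    and AK: "A \<noteq> K" and BK: "B \<noteq> K"
  shows "(\<lambda>X Y. Medge X Y \<and> X \<noteq> K \<and> Y \<noteq> K)\<^sup>*\<^sup>* A B"
proof -
  let ?R = "\<lambda>X Y. Medge X Y \<and> X \<noteq> K \<and> Y \<noteq> K"
  obtain x where x: "x \<in> A" "x \<notin> K" using clique_max[OF K A] AK by blast
  obtain y where y: "y \<in> B" "y \<notin> K" using clique_max[OF K B] BK by blast
  have xV: "x \<in> V" and yV: "y \<in> V" using x y clique_sub[OF A] clique_sub[OF B] by auto
  have "\<not> clique_separator V adj K" using at by (simp add: atom_def)
  then have "connected_graph (V - K) adj" using K xV x by (auto simp: clique_separator_def)
  then have "(\<lambda>a b. a \<in> V - K \<and> b \<in> V - K \<and> adj a b)\<^sup>*\<^sup>* x y"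
    using xV x yV y by (auto simp: connected_graph_def)
  then have "\<forall>C\<in>cl y. ?R\<^sup>*\<^sup>* A C"
  proof (induction rule: rtranclp_induct)
    case base
    show ?case
    proof
      fix C assume C: "C \<in> cl x"
      show "?R\<^sup>*\<^sup>* A C"
      proof (cases "C = A")
        case True then show ?thesis by simp
      next
        case False
        have "A \<in> cl x" using x A by (simp add: cl_def)
        then have "cl x = {A,C}" using cl_two[OF xV _ C] False by auto
        moreover have "C \<noteq> K" using C x by (auto simp: cl_def)
        ultimately have "?R A C" using xV AK False by (auto simp: Medge_def)
        then show ?thesis by (rule r_into_rtranclp)
      qed
    qed
  next
    case (step z z')
    then have z: "z \<in> V" "z \<notin> K" and z': "z' \<in> V" "z' \<notin> K" and a: "adj z z'" by auto
    obtain D where D: "D \<in> cl z" "D \<in> cl z'" using adj_iff[OF z(1) z'(1)] a by auto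
    have ih: "?R\<^sup>*\<^sup>* A D" using step.IH D by blast
    show ?case
    proof
      fix C assume C: "C \<in> cl z'"
      show "?R\<^sup>*\<^sup>* A C"
      proof (cases "C = D")
        case True then show ?thesis using ih by simp
      next
        case False
        then have "cl z' = {D,C}" using cl_two[OF z'(1) D(2) C] by auto
        moreover have "C \<noteq> K" "D \<noteq> K" using C D z' by (auto simp: cl_def)
        ultimately have "?R D C" using z' False by (auto simp: Medge_def)
        then show ?thesis using rtranclp.rtrancl_into_rtrancl[of ?R A D C] ih by simp
      qed
    qed
  qed
  then show ?thesis using y B by (auto simp: cl_def)
qed

lemma Mconn:
  assumes A: "A \<in> cliques V adj" and B: "B \<in> cliques V adj"
  shows "Medge\<^sup>*\<^sup>* A B"
proof -
  have "card (cliques V adj - {A,B}) \<noteq> 0"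
  proof -
    have "card (cliques V adj) \<le> card (cliques V adj - {A,B}) + card {A,B}"
      by (metis Diff_partition card_Un_le empty_subsetI insert_subset A B Un_commute)
    moreover have "card {A,B} \<le> 2" by (simp add: card_insert_le_m1)
    ultimately show ?thesis using k4 by linarith
  qed
  then have "cliques V adj - {A,B} \<noteq> {}" by (metis card.empty)
  then obtain K where K: "K \<in> cliques V adj" "K \<noteq> A" "K \<noteq> B" by blast
  have "(\<lambda>X Y. Medge X Y \<and> X \<noteq> K \<and> Y \<noteq> K)\<^sup>*\<^sup>* A B" using sepK[OF K(1) A B] K by auto
  then show ?thesis by (rule rtranclp_mono[THEN predicate2D, rotated]) auto
qed

lemma ear_exists:
  assumes N: "N \<subseteq> cliques V adj" and a0: "a0 \<in> N" and b0: "b0 \<in> N" and ab0: "a0 \<noteq> b0"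
    and Nc: "N \<noteq> cliques V adj"
  shows "\<exists>a b ds. a \<in> N \<and> b \<in> N \<and> a \<noteq> b \<and> ds \<noteq> [] \<and> set ds \<inter> N = {} \<and>
     set ds \<subseteq> cliques V adj \<and> distinct (a # ds @ [b]) \<and> successively Medge (a # ds @ [b])"
proof -
  obtain z0 where z0: "z0 \<in> cliques V adj" "z0 \<notin> N" using N Nc by blast
  have "Medge\<^sup>*\<^sup>* z0 a0" using Mconn[OF z0(1)] N a0 by auto
  then obtain u a where ua: "Medge u a" "u \<notin> N" "a \<in> N" using rtp_crossing z0(2) a0 by metis
  define z where "z = u"
  have za: "Medge a z" using ua Medge_sym by (simp add: z_def)
  have zc: "z \<in> cliques V adj" "z \<notin> N" using Medge_cl ua by (auto simp: z_def)
  obtain b' where b': "b' \<in> N" "b' \<noteq> a" using a0 b0 ab0 by metis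
  let ?R = "\<lambda>X Y. Medge X Y \<and> X \<noteq> a \<and> Y \<noteq> a"
  have ac: "a \<in> cliques V adj" using N ua(3) by auto
  have "?R\<^sup>*\<^sup>* z b'" using sepK[OF ac zc(1)] b' N zc ua(3) by auto
  then obtain xs where "rtrancl_path ?R z xs b'" by (auto simp: rtranclp_eq_rtrancl_path)
  then obtain xs' where xs': "rtrancl_path ?R z xs' b'" "distinct (z # xs')"
    by (rule rtrancl_path_distinct)
  define L where "L = z # xs'"
  have sL: "successively ?R L" and lL: "last L = b'" using rtp_succ[OF xs'(1)] by (auto simp: L_def)
  have dL: "distinct L" using xs' by (simp add: L_def)
  have "b' \<in> set L" using lL last_in_set[of L] by (simp add: L_def)
  then obtain ys t zs where split: "L = ys @ t # zs" "t \<in> N" "\<forall>y\<in>set ys. y \<notin> N"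
    using split_list_first_prop[of L "\<lambda>y. y \<in> N"] b'(1) by blast
  have ysne: "ys \<noteq> []" using split zc(2) by (cases ys) (auto simp: L_def)
  have hys: "hd ys = z" using split ysne by (cases ys) (auto simp: L_def)
  have nota: "\<forall>y\<in>set L. y \<noteq> a"
    unfolding L_def by (rule succ_all) (use sL zc ua(3) in \<open>auto simp: L_def\<close>)
  have s1: "successively ?R (ys @ [t])"
    using sL split(1) successively_append_iff[of ?R "ys @ [t]" zs] by simp
  have s2: "successively Medge (ys @ [t])"
    using s1 by (rule successively_mono) auto
  have s3: "successively Medge (a # ys @ [t])"
    using s2 za hys ysne by (simp add: successively_Cons hd_append)
  have d: "distinct (a # ys @ [t])" using dL split(1) nota by auto
  have ts: "t \<noteq> a" using nota split(1) by auto
  have yc: "set ys \<subseteq> cliques V adj"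
  proof
    fix y assume "y \<in> set ys"
    then obtain i where i: "i < length ys" "ys ! i = y" by (auto simp: in_set_conv_nth)
    have "Medge ((a # ys @ [t]) ! i) ((a # ys @ [t]) ! Suc i)"
      using successively_nth[OF s3, of i] i by simp
    then show "y \<in> cliques V adj" using Medge_cl i by (simp add: nth_append)
  qed
  show ?thesis using ua(3) split ts ysne d s3 yc by blast
qed

end


lemma valid_two: "valid es \<Longrightarrow> \<exists>a\<in>nodes es. \<exists>b\<in>nodes es. a \<noteq> b"
proof (induction rule: valid.induct)
  case (base c)
  then have "distinct (butlast c)" "5 \<le> length c" by (auto simp: cyc_def)
  then have "butlast c ! 0 \<noteq> butlast c ! 1" "1 < length (butlast c)"
    by (auto simp: nth_eq_iff_index_eq)
  moreover have "set (butlast c) \<subseteq> set c" by (auto dest: in_set_butlastD)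
  ultimately have "butlast c ! 0 \<in> set c" "butlast c ! 1 \<in> set c"
    by (meson nth_mem less_trans zero_less_one subsetD)+
  then show ?case using \<open>butlast c ! 0 \<noteq> butlast c ! 1\<close> by auto
next
  case (step es ns) then show ?case by auto
qed

context lg
begin

definition Mok :: "'a set list list \<Rightarrow> bool" where
  "Mok es \<longleftrightarrow> (\<forall>ns\<in>set es. successively Medge ns \<and> set ns \<subseteq> cliques V adj)"

lemma Mok_nodes: "Mok es \<Longrightarrow> nodes es \<subseteq> cliques V adj"
  by (auto simp: Mok_def nodes_def)

lemma init_cycle: "\<exists>c. cyc c \<and> successively Medge c \<and> set c \<subseteq> cliques V adj"
proof -
  obtain A B where AB: "A \<in> cliques V adj" "B \<in> cliques V adj" "A \<noteq> B"
    using two_elems[of "cliques V adj"] k4 by auto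
  have "Medge\<^sup>*\<^sup>* A B" using Mconn AB by auto
  then obtain u v where uv: "Medge u v" using AB(3) by (cases rule: converse_rtranclpE) auto
  have uvc: "u \<in> cliques V adj" "v \<in> cliques V adj" "u \<noteq> v" using Medge_cl uv by (auto simp: Medge_def)
  have "{u,v} \<noteq> cliques V adj"
  proof
    assume "{u,v} = cliques V adj"
    moreover have "card {u,v} \<le> 2" by (cases "u = v") auto
    ultimately have "card (cliques V adj) \<le> 2" by simp
    then show False using k4 by simp
  qed
  then obtain a b ds where e: "a \<in> {u,v}" "b \<in> {u,v}" "a \<noteq> b" "ds \<noteq> []" "set ds \<inter> {u,v} = {}"
     "set ds \<subseteq> cliques V adj" "distinct (a # ds @ [b])" "successively Medge (a # ds @ [b])"
    using ear_exists[of "{u,v}" u v] uvc by auto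
  have ab: "Medge b a" using e(1-3) uv Medge_sym by auto
  have "length ds \<noteq> 1"
  proof
    assume "length ds = 1"
    then obtain d where "ds = [d]" by (auto simp: length_Suc_conv)
    then have "Medge a d" "Medge d b" using e(8) by auto
    then show False using triangle_free ab Medge_sym by blast
  qed
  then have l2: "2 \<le> length ds" using e(4) by (cases ds) (auto simp: Suc_le_eq)
  define c where "c = a # ds @ [b, a]"
  have "cyc c" unfolding cyc_def c_def using l2 e(7) by (simp add: butlast_append)
  moreover have "successively Medge c"
    using e(8) ab successively_append_iff[of Medge "a # ds @ [b]" "[a]"] by (simp add: c_def)
  moreover have "set c \<subseteq> cliques V adj" using e uvc by (auto simp: c_def)
  ultimately show ?thesis by blast
qed

lemma fin_nodes: "Mok es \<Longrightarrow> finite (nodes es)"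
  using Mok_nodes fincl finite_subset by blast

lemma main_comb: "\<exists>es. valid es \<and> Mok es \<and> nodes es = cliques V adj"
proof -
  let ?Q = "\<lambda>n. \<exists>es. valid es \<and> Mok es \<and> card (nodes es) = n"
  obtain c where c: "cyc c" "successively Medge c" "set c \<subseteq> cliques V adj" using init_cycle by blast
  have "Mok [c]" using c by (simp add: Mok_def)
  then have q0: "?Q (card (nodes [c]))" using valid.base[OF c(1)] by blast
  have bd: "\<forall>n. ?Q n \<longrightarrow> n \<le> card (cliques V adj)"
    using Mok_nodes fincl card_mono by blast
  obtain n where n: "?Q n" "\<forall>m. ?Q m \<longrightarrow> m \<le> n"
    using Nat.ex_has_greatest_nat[OF q0 bd] by blast
  then obtain es where es: "valid es" "Mok es" "card (nodes es) = n" by blast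
  show ?thesis
  proof (rule ccontr)
    assume "\<not> ?thesis"
    then have Nc: "nodes es \<noteq> cliques V adj" using es by blast
    obtain a0 b0 where ab0: "a0 \<in> nodes es" "b0 \<in> nodes es" "a0 \<noteq> b0" using valid_two[OF es(1)] by blast
    obtain a b ds where e: "a \<in> nodes es" "b \<in> nodes es" "a \<noteq> b" "ds \<noteq> []" "set ds \<inter> nodes es = {}"
      "set ds \<subseteq> cliques V adj" "distinct (a # ds @ [b])" "successively Medge (a # ds @ [b])"
      using ear_exists[OF Mok_nodes[OF es(2)] ab0 Nc] by blast
    have fin: "finite (nodes es)" using fin_nodes[OF es(2)] .
    have bigger: "card (nodes es \<union> set ds) > n"
    proof -
      obtain d where "d \<in> set ds" using e(4) by (cases ds) auto
      then have "nodes es \<subset> nodes es \<union> set ds" using e(5) by blast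
      moreover have "finite (nodes es \<union> set ds)" using fin by simp
      ultimately show ?thesis using psubset_card_mono[of "nodes es \<union> set ds" "nodes es"] es(3) by simp
    qed
    show False
    proof (cases "{a,b} \<in> EE es")
      case False
      define ns where "ns = a # ds @ [b]"
      have "ear es ns" unfolding ear_def ns_def using e False by (auto simp: Suc_le_eq)
      then have v: "valid (es @ [ns])" using es(1) valid.step by blast
      have m: "Mok (es @ [ns])" using es(2) e(1,2,6,8) Mok_nodes[OF es(2)] by (auto simp: Mok_def ns_def)
      have "nodes (es @ [ns]) = nodes es \<union> set ds" using e(1,2) by (auto simp: ns_def)
      then have "?Q (card (nodes es \<union> set ds))" using v m by metis
      then show False using n(2) bigger by fastforce
    next
      case True
      then obtain ns where ns: "ns \<in> set es" "{a,b} \<in> edg ns" by (auto simp: EE_def)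
      then obtain j where j: "j < length es" "es ! j = ns" by (auto simp: in_set_conv_nth)
      obtain ys zs where sp: "ns = ys @ a # b # zs \<or> ns = ys @ b # a # zs" using edg_split[OF ns(2)] by blast
      have okns: "successively Medge ns" "set ns \<subseteq> cliques V adj" using es(2) ns(1) by (auto simp: Mok_def)
      obtain x y dd where xy: "ns = ys @ x # y # zs" "dd \<noteq> []" "distinct dd" "set dd = set ds"
          "successively Medge (x # dd @ [y])"
      proof (cases "ns = ys @ a # b # zs")
        case True
        then show ?thesis using that[of a b ds] e by auto
      next
        case False
        then have "ns = ys @ b # a # zs" using sp by blast
        moreover have "successively Medge (b # rev ds @ [a])"
        proof -
          have "successively (\<lambda>x y. Medge y x) (a # ds @ [b])"
            using e(8) by (rule successively_mono) (simp add: Medge_sym)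
          then have "successively Medge (rev (a # ds @ [b]))" by (simp only: successively_rev)
          then show ?thesis by (simp del: successively_rev)
        qed
        ultimately show ?thesis using that[of b a "rev ds"] e by auto
      qed
      define new where "new = ys @ x # dd @ y # zs"
      have v: "valid (es[j := new])"
        using valid_subdiv[OF es(1) j(1) _ xy(2,3)] j(2) xy(1,4) e(5) by (simp add: new_def)
      have setnew: "set new = set (es!j) \<union> set ds" using j(2) xy(1,4) by (auto simp: new_def)
      have nd: "nodes (es[j:=new]) = nodes es \<union> set ds" using nodes_update[OF j(1) setnew] .
      have "successively Medge new" using succ_subdiv[of Medge ys x y zs dd] okns(1) xy by (simp add: new_def)
      moreover have "set new \<subseteq> cliques V adj" using setnew e(6) okns j by auto
      ultimately have "Mok (es[j := new])" using es(2) j(1)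
        by (auto simp: Mok_def dest!: set_update_subset_insert[THEN subsetD])
      then have "?Q (card (nodes es \<union> set ds))" using v nd by metis
      then show False using n(2) bigger by fastforce
    qed
  qed
qed

end


lemma edg_nth: "e \<in> edg xs \<longleftrightarrow> (\<exists>i. Suc i < length xs \<and> e = {xs!i, xs!Suc i})"
proof (induction xs rule: edg.induct)
  case (1 a b xs)
  show ?case
  proof
    assume "e \<in> edg (a # b # xs)"
    then have "e = {a,b} \<or> e \<in> edg (b # xs)" by simp
    then show "\<exists>i. Suc i < length (a # b # xs) \<and> e = {(a # b # xs)!i, (a # b # xs)!Suc i}"
    proof
      assume "e = {a,b}" then show ?thesis by (intro exI[of _ 0]) simp
    next
      assume "e \<in> edg (b # xs)"
      then obtain i where "Suc i < length (b # xs)" "e = {(b # xs)!i, (b # xs)!Suc i}" using 1 by blast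
      then show ?thesis by (intro exI[of _ "Suc i"]) simp
    qed
  next
    assume "\<exists>i. Suc i < length (a # b # xs) \<and> e = {(a # b # xs)!i, (a # b # xs)!Suc i}"
    then obtain i where i: "Suc i < length (a # b # xs)" "e = {(a # b # xs)!i, (a # b # xs)!Suc i}" by blast
    show "e \<in> edg (a # b # xs)"
    proof (cases i)
      case 0 then show ?thesis using i by simp
    next
      case (Suc i')
      then have "e \<in> edg (b # xs)" using 1 i by auto
      then show ?thesis by simp
    qed
  qed
qed auto

lemma finite_edg: "finite (edg xs)"
  by (induction xs rule: edg.induct) auto

lemma finite_EE: "finite (EE es)"
  by (auto simp: EE_def finite_edg)

definition deg :: "'n list list \<Rightarrow> 'n \<Rightarrow> bool" where
  "deg es A \<longleftrightarrow> (\<exists>e1\<in>EE es. \<exists>e2\<in>EE es. e1 \<noteq> e2 \<and> A \<in> e1 \<and> A \<in> e2)"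

lemma mid_deg':
  assumes "0 < i" "Suc i < length ns" "ns!(i-1) \<noteq> ns!Suc i" "ns!(i-1) \<noteq> ns!i"
  shows "\<exists>e1\<in>edg ns. \<exists>e2\<in>edg ns. e1 \<noteq> e2 \<and> ns!i \<in> e1 \<and> ns!i \<in> e2"
proof -
  obtain i' where i': "i = Suc i'" using assms(1) by (cases i) auto
  have e1: "{ns!i', ns!i} \<in> edg ns" unfolding edg_nth using assms i' by (intro exI[of _ i']) simp
  have e2: "{ns!i, ns!Suc i} \<in> edg ns" using assms by (auto simp: edg_nth)
  have "ns!i' \<noteq> ns!Suc i" "ns!i' \<noteq> ns!i" using assms i' by auto
  then have ne: "{ns!i', ns!i} \<noteq> {ns!i, ns!Suc i}" by (auto simp: doubleton_eq_iff)
  show ?thesis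
    by (rule bexI[OF _ e1], rule bexI[OF _ e2]) (use ne in simp)
qed

lemma mid_deg:
  assumes "distinct ns" "0 < i" "Suc i < length ns"
  shows "\<exists>e1\<in>edg ns. \<exists>e2\<in>edg ns. e1 \<noteq> e2 \<and> ns!i \<in> e1 \<and> ns!i \<in> e2"
  using mid_deg'[OF assms(2,3)] assms by (simp add: nth_eq_iff_index_eq)

lemma cyc_deg:
  assumes c: "cyc c" and x: "x \<in> set c"
  shows "\<exists>e1\<in>edg c. \<exists>e2\<in>edg c. e1 \<noteq> e2 \<and> x \<in> e1 \<and> x \<in> e2"
proof -
  define n where "n = length c - 1"
  have n4: "4 \<le> n" and hl: "hd c = last c" and db: "distinct (butlast c)" using c by (auto simp: cyc_def n_def)
  have lc: "length c = Suc n" using n4 by (simp add: n_def)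
  have cne: "c \<noteq> []" using lc by auto
  have cn: "c!n = c!0" using hl cne by (simp add: hd_conv_nth last_conv_nth n_def)
  have dist: "\<And>a b. a < n \<Longrightarrow> b < n \<Longrightarrow> c!a = c!b \<longleftrightarrow> a = b"
    using db lc by (metis length_butlast nth_butlast nth_eq_iff_index_eq diff_Suc_1)
  obtain p where p: "p < length c" "c!p = x" using x by (auto simp: in_set_conv_nth)
  obtain q where q: "q < n" "c!q = x"
  proof (cases "p = n")
    case True then show ?thesis using that[of 0] p cn n4 by auto
  next
    case False then show ?thesis using that[of p] p lc by auto
  qed
  show ?thesis
  proof (cases q)
    case 0
    have e1: "{c!0, c!1} \<in> edg c" using lc n4 by (auto simp: edg_nth intro!: exI[of _ 0])
    have e2: "{c!(n-1), c!n} \<in> edg c" using lc n4 by (auto simp: edg_nth intro!: exI[of _ "n-1"])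
    have "c!1 \<noteq> c!(n-1)" "c!0 \<noteq> c!1" using dist n4 by auto
    then have ne: "{c!0, c!1} \<noteq> {c!(n-1), c!n}" using cn by (auto simp: doubleton_eq_iff)
    have x0: "x = c!0" using q 0 by simp
    show ?thesis
      by (rule bexI[OF _ e1], rule bexI[OF _ e2]) (use ne x0 cn in simp)
  next
    case (Suc q')
    have a: "c!(q-1) \<noteq> c!q" using dist[of "q-1" q] q Suc by simp
    have b: "c!(q-1) \<noteq> c!Suc q"
    proof (cases "Suc q < n")
      case True then show ?thesis using dist[of "q-1" "Suc q"] q Suc by simp
    next
      case False
      then have "Suc q = n" using q by simp
      then show ?thesis using dist[of "q-1" 0] q Suc cn n4 by simp
    qed
    show ?thesis using mid_deg'[of q c, OF _ _ b a] q lc Suc by simp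
  qed
qed


lemma valid_deg: "valid es \<Longrightarrow> \<forall>A\<in>nodes es. deg es A"
proof (induction rule: valid.induct)
  case (base c)
  show ?case
  proof
    fix A assume "A \<in> nodes [c]"
    then have "A \<in> set c" by simp
    from cyc_deg[OF base this] show "deg [c] A" by (simp add: deg_def)
  qed
next
  case (step es ns)
  show ?case
  proof
    fix A assume A: "A \<in> nodes (es @ [ns])"
    show "deg (es @ [ns]) A"
    proof (cases "A \<in> nodes es")
      case True
      then obtain e1 e2 where "e1 \<in> EE es" "e2 \<in> EE es" "e1 \<noteq> e2" "A \<in> e1" "A \<in> e2"
        using step.IH unfolding deg_def by blast
      then show ?thesis unfolding deg_def by (intro bexI[of _ e1] bexI[of _ e2]) auto
    next
      case False
      then have An: "A \<in> set ns" using A by simp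
      then obtain i where i: "i < length ns" "ns!i = A" by (auto simp: in_set_conv_nth)
      have e: "ear es ns" using step.hyps by simp
      have ne: "ns \<noteq> []" using e by (auto simp: ear_def)
      have "i \<noteq> 0" using i False e ne by (auto simp: ear_def hd_conv_nth)
      moreover have "i \<noteq> length ns - 1" using i False e ne by (auto simp: ear_def last_conv_nth)
      ultimately have "0 < i" "Suc i < length ns" using i by auto
      from mid_deg[OF _ this] e i show ?thesis unfolding deg_def ear_def by auto
    qed
  qed
qed

lemma nodes_EE: "valid es \<Longrightarrow> \<Union>(EE es) = nodes es"
proof
  show "\<Union>(EE es) \<subseteq> nodes es" by (auto simp: EE_def nodes_def dest: edg_sub_set)
  assume "valid es"
  then show "nodes es \<subseteq> \<Union>(EE es)" using valid_deg unfolding deg_def by blast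
qed


context lg
begin

definition lab :: "'a set set \<Rightarrow> 'a" where
  "lab e = (SOME v. v \<in> V \<and> cl v = e)"

lemma lab_spec: "\<exists>v\<in>V. cl v = e \<Longrightarrow> lab e \<in> V \<and> cl (lab e) = e"
  unfolding lab_def by (rule someI_ex) blast

lemma Mok_EE: "Mok es \<Longrightarrow> e \<in> EE es \<Longrightarrow> \<exists>v\<in>V. cl v = e"
proof -
  assume m: "Mok es" and e: "e \<in> EE es"
  then obtain ns where ns: "ns \<in> set es" "e \<in> edg ns" by (auto simp: EE_def)
  then have "successively Medge ns" using m by (auto simp: Mok_def)
  from edg_R[OF this ns(2)] obtain a b where "e = {a,b}" "Medge a b" by blast
  then show ?thesis by (auto simp: Medge_def)
qed

lemma char:
  assumes ME: "\<forall>e\<in>E. \<exists>v\<in>V. cl v = e"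
    and degE: "\<forall>A\<in>\<Union>E. \<exists>e1\<in>E. \<exists>e2\<in>E. e1 \<noteq> e2 \<and> A \<in> e1 \<and> A \<in> e2"
    and ne: "E \<noteq> {}"
  shows "cliques (lab ` E) adj = (\<lambda>A. {v \<in> lab ` E. A \<in> cl v}) ` (\<Union>E)"
    and "inj_on (\<lambda>A. {v \<in> lab ` E. A \<in> cl v}) (\<Union>E)"
proof -
  define S where "S = lab ` E"
  define st where "st = (\<lambda>A. {v \<in> S. A \<in> cl v})"
  have SV: "S \<subseteq> V" using ME lab_spec by (auto simp: S_def)
  have clS: "\<And>v. v \<in> S \<Longrightarrow> cl v \<in> E \<and> lab (cl v) = v"
    using ME lab_spec by (auto simp: S_def)
  have injcl: "\<And>v w. v \<in> S \<Longrightarrow> w \<in> S \<Longrightarrow> cl v = cl w \<Longrightarrow> v = w"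
    using clS by metis
  have two: "\<exists>u w. u \<in> st A \<and> w \<in> st A \<and> u \<noteq> w" if A: "A \<in> \<Union>E" for A
  proof -
    obtain e1 e2 where e: "e1 \<in> E" "e2 \<in> E" "e1 \<noteq> e2" "A \<in> e1" "A \<in> e2" using degE A by blast
    have l: "lab e1 \<in> S" "lab e2 \<in> S" using e by (auto simp: S_def)
    have c1: "cl (lab e1) = e1" using ME lab_spec e(1) by blast
    have c2: "cl (lab e2) = e2" using ME lab_spec e(2) by blast
    have "lab e1 \<in> st A" unfolding st_def using l(1) c1 e(4) by simp
    moreover have "lab e2 \<in> st A" unfolding st_def using l(2) c2 e(5) by simp
    moreover have "lab e1 \<noteq> lab e2" using c1 c2 e(3) by metis
    ultimately show ?thesis by blast
  qed
  have stc: "complete_set S adj (st A)" for A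
    unfolding complete_set_def
  proof (intro conjI ballI impI)
    show "st A \<subseteq> S" by (auto simp: st_def)
    fix x y assume "x \<in> st A" "y \<in> st A" "x \<noteq> y"
    then show "adj x y" using adj_iff SV by (auto simp: st_def)
  qed
  have stcl: "st A \<in> cliques S adj" if A: "A \<in> \<Union>E" for A
  proof -
    have "K' = st A" if K': "complete_set S adj K'" "st A \<subseteq> K'" for K'
    proof (rule ccontr)
      assume "K' \<noteq> st A"
      then obtain y where y: "y \<in> K'" "y \<notin> st A" using K'(2) by blast
      obtain u w where uw: "u \<in> st A" "w \<in> st A" "u \<noteq> w" using two[OF A] by blast
      have yS: "y \<in> S" using y K' by (auto simp: complete_set_def)
      have uS: "u \<in> S" "w \<in> S" "A \<in> cl u" "A \<in> cl w" using uw by (auto simp: st_def)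
      have Ay: "A \<notin> cl y" using y yS by (auto simp: st_def)
      have "y \<noteq> u" "y \<noteq> w" using y uw by auto
      then have "adj y u" "adj y w" using K' y uw by (auto simp: complete_set_def)
      moreover have "adj u w" using stc uw by (auto simp: complete_set_def)
      ultimately have "cl y \<inter> cl u \<inter> cl w \<noteq> {}"
        using tri[of y u w] SV yS uS by auto
      then obtain C where C: "C \<in> cl y" "C \<in> cl u" "C \<in> cl w" by blast
      have AC: "A \<noteq> C" using C Ay by auto
      have uV: "u \<in> V" "w \<in> V" using SV uS by auto
      have "cl u = {A,C}" using cl_two[OF uV(1) uS(3) C(2) AC] .
      moreover have "cl w = {A,C}" using cl_two[OF uV(2) uS(4) C(3) AC] .
      ultimately have "cl u = cl w" by simp
      then have "u = w" using injcl uS by blast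
      then show False using uw by simp
    qed
    then show ?thesis using stc unfolding cliques_def by blast
  qed
  show "cliques (lab ` E) adj = (\<lambda>A. {v \<in> lab ` E. A \<in> cl v}) ` (\<Union>E)"
    unfolding S_def[symmetric] st_def[symmetric]
  proof
    show "st ` \<Union>E \<subseteq> cliques S adj" using stcl by blast
    show "cliques S adj \<subseteq> st ` \<Union>E"
    proof
      fix K assume K: "K \<in> cliques S adj"
      have Kc: "complete_set S adj K" using K by (simp add: cliques_def)
      have "K \<noteq> {}"
      proof
        assume "K = {}"
        obtain e where "e \<in> E" using ne by blast
        then have "lab e \<in> S" by (simp add: S_def)
        then have "complete_set S adj {lab e}" by (auto simp: complete_set_def)
        then show False using K \<open>K = {}\<close> by (auto simp: cliques_def)
      qed
      then obtain x where x: "x \<in> K" by blast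
      have "complete_set V adj K" using Kc SV by (auto simp: complete_set_def)
      then obtain L where L: "L \<in> cliques V adj" "K \<subseteq> L" using complete_in_clique[OF finV] by blast
      have xS: "x \<in> S" using x Kc by (auto simp: complete_set_def)
      have "L \<in> cl x" using L x by (auto simp: cl_def)
      then have LE: "L \<in> \<Union>E" using clS[OF xS] by blast
      have "K \<subseteq> st L" using L Kc by (auto simp: st_def cl_def complete_set_def)
      moreover have "complete_set S adj (st L)" using stc .
      ultimately have "st L = K" using K by (auto simp: cliques_def)
      then show "K \<in> st ` \<Union>E" using LE by blast
    qed
  qed
  show "inj_on (\<lambda>A. {v \<in> lab ` E. A \<in> cl v}) (\<Union>E)"
    unfolding S_def[symmetric] st_def[symmetric]
  proof
    fix A B assume A: "A \<in> \<Union>E" and B: "B \<in> \<Union>E" and eq: "st A = st B"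
    show "A = B"
    proof (rule ccontr)
      assume AB: "A \<noteq> B"
      obtain u w where uw: "u \<in> st A" "w \<in> st A" "u \<noteq> w" using two[OF A] by blast
      then have "u \<in> st B" "w \<in> st B" using eq by auto
      then have h: "u \<in> S" "w \<in> S" "A \<in> cl u" "B \<in> cl u" "A \<in> cl w" "B \<in> cl w" using uw by (auto simp: st_def)
      have uV: "u \<in> V" "w \<in> V" using SV h by auto
      have "cl u = {A,B}" using cl_two[OF uV(1) h(3) h(4) AB] .
      moreover have "cl w = {A,B}" using cl_two[OF uV(2) h(5) h(6) AB] .
      ultimately have "u = w" using injcl h(1,2) by auto
      then show False using uw by simp
    qed
  qed
qed


lemma Suc_mod_if: "p < n \<Longrightarrow> Suc p mod n = (if Suc p = n then 0 else Suc p)"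
  by (cases "Suc p = n") auto

lemma gate_cycle:
  assumes c: "cyc c" and m: "Mok [c]"
  shows "gate (lab ` EE [c]) adj"
proof -
  define cs where "cs = butlast c"
  define n where "n = length cs"
  have n4: "4 \<le> n" and hl: "hd c = last c" and dcs: "distinct cs"
    using c by (auto simp: cyc_def n_def cs_def)
  have lc: "length c = Suc n" using c by (auto simp: cyc_def n_def cs_def)
  have cne: "c \<noteq> []" using lc by auto
  have ci: "\<And>i. i < n \<Longrightarrow> c!i = cs!i" by (simp add: cs_def n_def nth_butlast)
  have cn: "c!n = cs!0"
  proof -
    have "c!n = last c" using lc cne by (simp add: last_conv_nth)
    also have "\<dots> = c!0" using hl cne by (simp add: hd_conv_nth)
    also have "\<dots> = cs!0" using ci n4 by simp
    finally show ?thesis .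
  qed
  define f where "f i = Suc i mod n" for i
  define E where "E i = {cs!i, cs!(f i)}" for i
  have fn: "\<And>i. i < n \<Longrightarrow> f i < n" using n4 by (simp add: f_def)
  have fif: "\<And>i. i < n \<Longrightarrow> f i = (if Suc i = n then 0 else Suc i)" by (simp add: f_def Suc_mod_if)
  have csd: "\<And>a b. a < n \<Longrightarrow> b < n \<Longrightarrow> cs!a = cs!b \<longleftrightarrow> a = b"
    using dcs by (simp add: n_def nth_eq_iff_index_eq)
  have cSuc: "\<And>i. i < n \<Longrightarrow> c!Suc i = cs!(f i)"
  proof -
    fix i assume i: "i < n"
    show "c!Suc i = cs!(f i)"
    proof (cases "Suc i = n")
      case True then show ?thesis using cn fif[OF i] by simp
    next
      case False then show ?thesis using ci i fif[OF i] by simp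
    qed
  qed
  have edgc: "edg c = E ` {..<n}"
  proof
    show "edg c \<subseteq> E ` {..<n}"
    proof
      fix e assume "e \<in> edg c"
      then obtain i where i: "Suc i < length c" "e = {c!i, c!Suc i}" by (auto simp: edg_nth)
      then have "i < n" using lc by simp
      then show "e \<in> E ` {..<n}" using i ci cSuc by (auto simp: E_def)
    qed
    show "E ` {..<n} \<subseteq> edg c"
    proof
      fix e assume "e \<in> E ` {..<n}"
      then obtain i where i: "i < n" "e = E i" by auto
      then have "e = {c!i, c!Suc i}" using ci cSuc by (simp add: E_def)
      then show "e \<in> edg c" unfolding edg_nth using i lc by (intro exI[of _ i]) simp
    qed
  qed
  have EE: "EE [c] = E ` {..<n}" using edgc by simp
  have ME: "\<And>i. i < n \<Longrightarrow> \<exists>v\<in>V. cl v = E i" using Mok_EE[OF m] EE by auto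
  define xs where "xs = map (\<lambda>i. lab (E i)) [0..<n]"
  have lxs: "length xs = n" by (simp add: xs_def)
  have xsn: "\<And>i. i < n \<Longrightarrow> xs!i = lab (E i)" by (simp add: xs_def)
  have clx: "\<And>i. i < n \<Longrightarrow> cl (xs!i) = E i \<and> xs!i \<in> V" using xsn ME lab_spec by simp
  have Einj: "\<And>p q. p < n \<Longrightarrow> q < n \<Longrightarrow> E p = E q \<Longrightarrow> p = q"
  proof -
    fix p q assume pq: "p < n" "q < n" "E p = E q"
    then have "(cs!p = cs!q \<and> cs!(f p) = cs!(f q)) \<or> (cs!p = cs!(f q) \<and> cs!(f p) = cs!q)"
      by (auto simp: E_def doubleton_eq_iff)
    then have "p = q \<or> (p = f q \<and> f p = q)" using csd fn pq by auto
    then show "p = q" using fif pq n4 by (auto split: if_splits)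
  qed
  have xinj: "\<And>p q. p < n \<Longrightarrow> q < n \<Longrightarrow> xs!p = xs!q \<longleftrightarrow> p = q"
    using clx Einj by metis
  have fq: "\<And>q. q < n \<Longrightarrow> f q \<noteq> q" using fif n4 by auto
  have Eint: "\<And>p q. p < n \<Longrightarrow> q < n \<Longrightarrow> p \<noteq> q \<Longrightarrow> (E p \<inter> E q \<noteq> {} \<longleftrightarrow> p = f q \<or> q = f p)"
  proof -
    fix p q assume pq: "p < n" "q < n" "p \<noteq> q"
    have finj: "f p = f q \<longleftrightarrow> p = q" using fif pq by auto
    have "E p \<inter> E q \<noteq> {} \<longleftrightarrow> cs!p = cs!q \<or> cs!p = cs!(f q) \<or> cs!(f p) = cs!q \<or> cs!(f p) = cs!(f q)"
      by (auto simp: E_def)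
    also have "\<dots> \<longleftrightarrow> p = q \<or> p = f q \<or> f p = q \<or> f p = f q" using csd fn pq by simp
    finally show "E p \<inter> E q \<noteq> {} \<longleftrightarrow> p = f q \<or> q = f p" using finj pq by auto
  qed
  have dxs: "distinct xs" unfolding distinct_conv_nth using xinj lxs by simp
  have sxs: "lab ` EE [c] = set xs" unfolding EE xs_def by auto
  have adjc: "\<forall>x\<in>set xs. \<forall>y\<in>set xs. adj x y \<longleftrightarrow> cycle_adj xs x y"
  proof (intro ballI)
    fix x y assume "x \<in> set xs" "y \<in> set xs"
    then obtain p q where pq: "p < n" "q < n" "x = xs!p" "y = xs!q" using lxs by (auto simp: in_set_conv_nth)
    have "adj x y \<longleftrightarrow> p \<noteq> q \<and> E p \<inter> E q \<noteq> {}"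
      using adj_iff[of x y] clx pq xinj by simp
    also have "\<dots> \<longleftrightarrow> p = f q \<or> q = f p"
    proof (cases "p = q")
      case True
      then show ?thesis using fq[OF pq(1)] by auto
    next
      case False
      then show ?thesis using Eint[OF pq(1,2) False] by simp
    qed
    also have "\<dots> \<longleftrightarrow> cycle_adj xs x y"
    proof -
      have "cycle_adj xs x y \<longleftrightarrow> (\<exists>i<n. {xs!p, xs!q} = {xs!i, xs!(f i)})"
        unfolding cycle_adj_def lxs f_def using pq by simp
      also have "\<dots> \<longleftrightarrow> (\<exists>i<n. (p = i \<and> q = f i) \<or> (p = f i \<and> q = i))"
        using xinj fn pq by (auto simp: doubleton_eq_iff)
      also have "\<dots> \<longleftrightarrow> p = f q \<or> q = f p" using pq by auto
      finally show ?thesis by simp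
    qed
    finally show "adj x y \<longleftrightarrow> cycle_adj xs x y" .
  qed
  show ?thesis unfolding sxs by (rule gate.cycle[OF dxs]) (use lxs n4 adjc in auto)
qed

end


context lg
begin

lemma gate_step:
  assumes ear: "ear es ns" and m: "Mok (es @ [ns])"
    and IHg: "gate (lab ` EE es) adj"
    and IHc: "cliques (lab ` EE es) adj = (\<lambda>A. {v \<in> lab ` EE es. A \<in> cl v}) ` nodes es"
  shows "gate (lab ` EE (es @ [ns])) adj"
proof -
  define S' where "S' = lab ` EE es"
  define m where "m = length ns"
  define Eps where "Eps i = {ns!i, ns!Suc i}" for i
  define ps where "ps = map (\<lambda>i. lab (Eps i)) [0..<m-1]"
  define C where "C = {v \<in> S'. hd ns \<in> cl v}"
  define C' where "C' = {v \<in> S'. last ns \<in> cl v}"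
  have m3: "3 \<le> m" and dns: "distinct ns" and hdN: "hd ns \<in> nodes es" and lN: "last ns \<in> nodes es"
    and hlE: "{hd ns, last ns} \<notin> EE es"
    and mid: "\<forall>x\<in>set ns. x \<noteq> hd ns \<longrightarrow> x \<noteq> last ns \<longrightarrow> x \<notin> nodes es"
    using ear by (auto simp: ear_def m_def)
  have nne: "ns \<noteq> []" using m3 m_def by auto
  have hd0: "hd ns = ns!0" using nne by (simp add: hd_conv_nth)
  have lst: "last ns = ns!(m-1)" using nne by (simp add: last_conv_nth m_def)
  have nsd: "\<And>a b. a < m \<Longrightarrow> b < m \<Longrightarrow> ns!a = ns!b \<longleftrightarrow> a = b"
    using dns by (simp add: m_def nth_eq_iff_index_eq)
  have inN: "\<And>i. i < m \<Longrightarrow> ns!i \<in> nodes es \<longleftrightarrow> i = 0 \<or> i = m - 1"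
  proof -
    fix i assume i: "i < m"
    show "ns!i \<in> nodes es \<longleftrightarrow> i = 0 \<or> i = m - 1"
    proof
      assume "ns!i \<in> nodes es"
      moreover have "ns!i \<in> set ns" using i by (simp add: m_def)
      ultimately have "ns!i = hd ns \<or> ns!i = last ns" using mid by blast
      then show "i = 0 \<or> i = m - 1" using nsd i m3 hd0 lst by auto
    next
      assume "i = 0 \<or> i = m - 1"
      then show "ns!i \<in> nodes es" using hdN lN hd0 lst by auto
    qed
  qed
  have EpsE: "Eps i \<in> edg ns" if "i < m - 1" for i
    unfolding Eps_def edg_nth using that by (intro exI[of _ i]) (simp add: m_def)
  have ME: "\<And>i. i < m - 1 \<Longrightarrow> \<exists>v\<in>V. cl v = Eps i" using Mok_EE[OF m] EpsE by auto
  have lps: "length ps = m - 1" by (simp add: ps_def)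
  have psn: "\<And>i. i < m - 1 \<Longrightarrow> ps!i = lab (Eps i)" by (simp add: ps_def)
  have clps: "\<And>i. i < m - 1 \<Longrightarrow> cl (ps!i) = Eps i \<and> ps!i \<in> V" using psn ME lab_spec by simp
  have Einj: "\<And>p q. p < m - 1 \<Longrightarrow> q < m - 1 \<Longrightarrow> Eps p = Eps q \<Longrightarrow> p = q"
  proof -
    fix p q assume pq: "p < m - 1" "q < m - 1" "Eps p = Eps q"
    then have "ns!p = ns!q \<or> ns!p = ns!Suc q" by (auto simp: Eps_def doubleton_eq_iff)
    moreover have "ns!Suc p = ns!q \<or> ns!Suc p = ns!Suc q" using pq by (auto simp: Eps_def doubleton_eq_iff)
    ultimately show "p = q" using nsd pq by auto
  qed
  have psinj: "\<And>p q. p < m - 1 \<Longrightarrow> q < m - 1 \<Longrightarrow> ps!p = ps!q \<longleftrightarrow> p = q"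
    using clps Einj by metis
  have dps: "distinct ps" unfolding distinct_conv_nth using psinj lps by simp
  have setps: "set ps = lab ` edg ns"
  proof
    show "set ps \<subseteq> lab ` edg ns" using EpsE by (auto simp: ps_def)
    show "lab ` edg ns \<subseteq> set ps"
    proof
      fix x assume "x \<in> lab ` edg ns"
      then obtain i where i: "Suc i < m" "x = lab {ns!i, ns!Suc i}" by (auto simp: edg_nth m_def)
      then show "x \<in> set ps" by (auto simp: ps_def Eps_def)
    qed
  qed
  have S'V: "\<And>v. v \<in> S' \<Longrightarrow> v \<in> V \<and> cl v \<in> EE es \<and> cl v \<subseteq> nodes es"
  proof -
    fix v assume "v \<in> S'"
    then obtain e where e: "e \<in> EE es" "v = lab e" by (auto simp: S'_def)
    have "\<exists>w\<in>V. cl w = e" using Mok_EE[OF m] e(1) by auto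
    then have "v \<in> V" "cl v = e" using lab_spec e(2) by auto
    moreover have "e \<subseteq> nodes es" using e(1) by (auto simp: EE_def nodes_def dest: edg_sub_set)
    ultimately show "v \<in> V \<and> cl v \<in> EE es \<and> cl v \<subseteq> nodes es" using e by auto
  qed
  have disj: "set ps \<inter> S' = {}"
  proof (rule ccontr)
    assume "set ps \<inter> S' \<noteq> {}"
    then obtain i where i: "i < m - 1" "ps!i \<in> S'" using lps by (auto simp: in_set_conv_nth)
    then have "Eps i \<subseteq> nodes es" using S'V clps by metis
    then have "ns!i \<in> nodes es" "ns!Suc i \<in> nodes es" by (auto simp: Eps_def)
    then show False using inN i m3 by (metis Suc_lessD less_diff_conv add_2_eq_Suc' Suc_eq_plus1 nat.distinct(1)
        diff_Suc_1 not_less_eq_eq numeral_3_eq_3 Suc_le_mono le_refl not_less)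
  qed
  have Snew: "lab ` EE (es @ [ns]) = S' \<union> set ps" using setps by (auto simp: S'_def)
  have CC: "C \<in> cliques S' adj" "C' \<in> cliques S' adj"
    using IHc hdN lN by (auto simp: S'_def C_def C'_def)
  have CCd: "C \<inter> C' = {}"
  proof (rule ccontr)
    assume "C \<inter> C' \<noteq> {}"
    then obtain v where v: "v \<in> S'" "hd ns \<in> cl v" "last ns \<in> cl v" by (auto simp: C_def C'_def)
    have "hd ns \<noteq> last ns" using hd0 lst nsd m3 by simp
    then have "cl v = {hd ns, last ns}" using cl_two v S'V by blast
    then show False using S'V v hlE by metis
  qed
  have CS: "C \<subseteq> S'" "C' \<subseteq> S'" by (auto simp: C_def C'_def)
  have psne: "ps \<noteq> []" using lps m3 by auto
  have hps: "hd ps = ps!0" using psne by (simp add: hd_conv_nth)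
  have lps': "last ps = ps!(m-2)" using psne lps by (simp add: last_conv_nth numeral_2_eq_2)
  define RHS where "RHS x y \<longleftrightarrow> list_adj ps x y \<or> (x = hd ps \<and> y \<in> C) \<or> (y = hd ps \<and> x \<in> C)
      \<or> (x = last ps \<and> y \<in> C') \<or> (y = last ps \<and> x \<in> C')" for x y
  have RHSsym: "\<And>x y. RHS x y \<longleftrightarrow> RHS y x"
    unfolding RHS_def list_adj_def by (auto simp: insert_commute)
  have la: "\<And>p q. p < m - 1 \<Longrightarrow> q < m - 1 \<Longrightarrow> list_adj ps (ps!p) (ps!q) \<longleftrightarrow> q = Suc p \<or> p = Suc q"
  proof -
    fix p q assume pq: "p < m - 1" "q < m - 1"
    have "list_adj ps (ps!p) (ps!q) \<longleftrightarrow> (\<exists>i. Suc i < m - 1 \<and> {ps!p, ps!q} = {ps!i, ps!Suc i})"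
      unfolding list_adj_def lps ..
    also have "\<dots> \<longleftrightarrow> (\<exists>i. Suc i < m - 1 \<and> ((p = i \<and> q = Suc i) \<or> (p = Suc i \<and> q = i)))"
      using psinj pq by (auto simp: doubleton_eq_iff)
    also have "\<dots> \<longleftrightarrow> q = Suc p \<or> p = Suc q" using pq by auto
    finally show "list_adj ps (ps!p) (ps!q) \<longleftrightarrow> q = Suc p \<or> p = Suc q" .
  qed
  have lanot: "\<And>x y. y \<notin> set ps \<Longrightarrow> \<not> list_adj ps x y"
    unfolding list_adj_def by (auto simp: doubleton_eq_iff)
  have key: "\<And>x y. x \<in> set ps \<Longrightarrow> y \<in> S' \<union> set ps \<Longrightarrow> adj x y \<longleftrightarrow> RHS x y"
  proof -
    fix x y assume x: "x \<in> set ps" and y: "y \<in> S' \<union> set ps"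
    obtain p where p: "p < m - 1" "x = ps!p" using x lps by (auto simp: in_set_conv_nth)
    have xV: "x \<in> V" and clx: "cl x = Eps p" using clps p by auto
    have xC: "x \<notin> C" "x \<notin> C'" using x disj CS by auto
    show "adj x y \<longleftrightarrow> RHS x y"
    proof (cases "y \<in> set ps")
      case True
      obtain q where q: "q < m - 1" "y = ps!q" using True lps by (auto simp: in_set_conv_nth)
      have yV: "y \<in> V" and cly: "cl y = Eps q" using clps q by auto
      have yC: "y \<notin> C" "y \<notin> C'" using True disj CS by auto
      have "adj x y \<longleftrightarrow> p \<noteq> q \<and> Eps p \<inter> Eps q \<noteq> {}"
        using adj_iff[OF xV yV] clx cly p q psinj by simp
      also have "\<dots> \<longleftrightarrow> q = Suc p \<or> p = Suc q"
      proof -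
        have "Eps p \<inter> Eps q \<noteq> {} \<longleftrightarrow> ns!p = ns!q \<or> ns!p = ns!Suc q \<or> ns!Suc p = ns!q \<or> ns!Suc p = ns!Suc q"
          by (auto simp: Eps_def)
        also have "\<dots> \<longleftrightarrow> p = q \<or> p = Suc q \<or> Suc p = q" using nsd p q by auto
        finally show ?thesis by auto
      qed
      also have "\<dots> \<longleftrightarrow> RHS x y" unfolding RHS_def using la[OF p(1) q(1)] p q xC yC by auto
      finally show ?thesis .
    next
      case False
      then have yS: "y \<in> S'" using y by simp
      have yV: "y \<in> V" and cly: "cl y \<subseteq> nodes es" using S'V yS by auto
      have xy: "x \<noteq> y" using x False by auto
      have yh: "y \<noteq> hd ps" "y \<noteq> last ps" using False lps m3 by (auto simp: hps lps')
      have "adj x y \<longleftrightarrow> ns!p \<in> cl y \<or> ns!Suc p \<in> cl y"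
        using adj_iff[OF xV yV] clx xy by (auto simp: Eps_def)
      also have "\<dots> \<longleftrightarrow> (p = 0 \<and> hd ns \<in> cl y) \<or> (p = m - 2 \<and> last ns \<in> cl y)"
      proof
        assume "ns!p \<in> cl y \<or> ns!Suc p \<in> cl y"
        then show "(p = 0 \<and> hd ns \<in> cl y) \<or> (p = m - 2 \<and> last ns \<in> cl y)"
        proof
          assume a: "ns!p \<in> cl y"
          then have "p = 0 \<or> p = m - 1" using inN cly p by auto
          then have "p = 0" using p by auto
          then show ?thesis using a hd0 by simp
        next
          assume a: "ns!Suc p \<in> cl y"
          then have "Suc p = 0 \<or> Suc p = m - 1" using inN[of "Suc p"] cly p by auto
          then have "p = m - 2" using p by auto
          moreover have "Suc p = m - 1" using \<open>Suc p = 0 \<or> Suc p = m - 1\<close> by simp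
          ultimately show ?thesis using a lst by simp
        qed
      next
        assume "(p = 0 \<and> hd ns \<in> cl y) \<or> (p = m - 2 \<and> last ns \<in> cl y)"
        then show "ns!p \<in> cl y \<or> ns!Suc p \<in> cl y"
        proof
          assume "p = 0 \<and> hd ns \<in> cl y" then show ?thesis using hd0 by simp
        next
          assume a: "p = m - 2 \<and> last ns \<in> cl y"
          then have "Suc p = m - 1" using m3 by simp
          then show ?thesis using a lst by simp
        qed
      qed
      also have "\<dots> \<longleftrightarrow> RHS x y"
      proof -
        have "x = hd ps \<longleftrightarrow> p = 0" using p psinj hps m3 by auto
        moreover have "x = last ps \<longleftrightarrow> p = m - 2" using p psinj lps' m3 by auto
        moreover have "y \<in> C \<longleftrightarrow> hd ns \<in> cl y" "y \<in> C' \<longleftrightarrow> last ns \<in> cl y" using yS by (auto simp: C_def C'_def)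
        ultimately show ?thesis unfolding RHS_def using lanot[OF False] yh xC by auto
      qed
      finally show ?thesis .
    qed
  qed
  have adjcond: "\<forall>x\<in>S' \<union> set ps. \<forall>y\<in>S' \<union> set ps. (x \<in> set ps \<or> y \<in> set ps) \<longrightarrow> (adj x y \<longleftrightarrow> RHS x y)"
  proof (intro ballI impI)
    fix x y assume x: "x \<in> S' \<union> set ps" and y: "y \<in> S' \<union> set ps" and o: "x \<in> set ps \<or> y \<in> set ps"
    show "adj x y \<longleftrightarrow> RHS x y"
    proof (cases "x \<in> set ps")
      case True then show ?thesis using key y by blast
    next
      case False
      then have yp: "y \<in> set ps" using o by simp
      have "x \<in> V" "y \<in> V" using x y S'V clps lps by (auto simp: in_set_conv_nth)
      then have "adj x y \<longleftrightarrow> adj y x" using graph_sym[OF g] by blast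
      also have "\<dots> \<longleftrightarrow> RHS y x" using key[OF yp x] .
      also have "\<dots> \<longleftrightarrow> RHS x y" using RHSsym by blast
      finally show ?thesis .
    qed
  qed
  have "gate (S' \<union> set ps) adj"
    by (rule gate.extend[OF IHg[folded S'_def] CC(1) CC(2) CCd dps _ _ refl])
       (use lps m3 disj adjcond in \<open>auto simp: RHS_def\<close>)
  then show ?thesis using Snew by simp
qed

end


context lg
begin

lemma cliques_S:
  assumes v: "valid es" and m: "Mok es"
  shows "cliques (lab ` EE es) adj = (\<lambda>A. {v \<in> lab ` EE es. A \<in> cl v}) ` nodes es"
    and "inj_on (\<lambda>A. {v \<in> lab ` EE es. A \<in> cl v}) (nodes es)"
proof -
  have ME: "\<forall>e\<in>EE es. \<exists>v\<in>V. cl v = e" using Mok_EE[OF m] by blast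
  have U: "\<Union>(EE es) = nodes es" using nodes_EE[OF v] .
  have degE: "\<forall>A\<in>\<Union>(EE es). \<exists>e1\<in>EE es. \<exists>e2\<in>EE es. e1 \<noteq> e2 \<and> A \<in> e1 \<and> A \<in> e2"
    using valid_deg[OF v] U unfolding deg_def by simp
  obtain a where "a \<in> nodes es" using valid_two[OF v] by blast
  then have ne: "EE es \<noteq> {}" using U by auto
  show "cliques (lab ` EE es) adj = (\<lambda>A. {v \<in> lab ` EE es. A \<in> cl v}) ` nodes es"
    using char(1)[OF ME degE ne] U by simp
  show "inj_on (\<lambda>A. {v \<in> lab ` EE es. A \<in> cl v}) (nodes es)"
    using char(2)[OF ME degE ne] U by simp
qed

lemma Mok_butlast: "Mok (es @ [ns]) \<Longrightarrow> Mok es"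
  by (simp add: Mok_def)

lemma gate_valid: "valid es \<Longrightarrow> Mok es \<Longrightarrow> gate (lab ` EE es) adj"
proof (induction rule: valid.induct)
  case (base c)
  then show ?case using gate_cycle by blast
next
  case (step es ns)
  have m: "Mok es" using Mok_butlast[OF step.prems] .
  show ?case
    using gate_step[OF step.hyps(2) step.prems step.IH[OF m] cliques_S(1)[OF step.hyps(1) m]] .
qed

lemma lg_main: "\<exists>S\<subseteq>V. k_gate (card (cliques V adj)) S adj"
proof -
  obtain es where es: "valid es" "Mok es" "nodes es = cliques V adj" using main_comb by blast
  have SV: "lab ` EE es \<subseteq> V" using Mok_EE[OF es(2)] lab_spec by blast
  have gt: "gate (lab ` EE es) adj" using gate_valid es by blast
  have "card (cliques (lab ` EE es) adj) = card (nodes es)"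
    unfolding cliques_S(1)[OF es(1,2)] using card_image[OF cliques_S(2)[OF es(1,2)]] .
  then have "k_gate (card (cliques V adj)) (lab ` EE es) adj" using gt es(3) by (simp add: k_gate_def)
  then show ?thesis using SV by blast
qed

end

theorem lemma11:
  fixes V :: "'a set" and adj :: "'a \<Rightarrow> 'a \<Rightarrow> bool" and k :: nat
  assumes "graph V adj"
    and "helly_ept V adj"
    and "atom V adj"
    and "card (cliques V adj) = k"
    and "4 \<le> k"
  shows "\<exists>S \<subseteq> V. k_gate k S adj"
proof -
  obtain VT :: "nat set" and adjT P where r: "ept_rep V adj VT adjT P" "helly_rep V P"
    using assms(2) by (auto simp: helly_ept_def)
  interpret h: hept V adj VT adjT P
    using assms r by unfold_locales auto
  interpret l: lg V adj
    using assms h.le2 by unfold_locales auto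
  show ?thesis using l.lg_main assms(4) by simp
qed


end
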